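(* Let $\mathfrak{A}$ be a separable unital C*-algebra and let $\boldsymbol{\pi}=(\pi_n)_{n\ge1}$ be a random AP sequence for $\mathfrak{A}$ with $\dim\pi_n = d_n$ that converges in the LD sense. Let $a\in\mathfrak{A}$ be non-negative. For $c>0$ let $S_c := \{\phi\in\mathcal{S}_1(\mathfrak{A}):\phi(a)\ge c\}$ and $I(c) := \sup\{\mathrm{h}^0_{\boldsymbol{\pi}}(\phi):\phi\in S_c\}$. Then \[I(c)\cdot d_n + o(d_n)\ \ge\ \log\mathbf{P}(\|\pi_n(a)\|\ge c)\ \ge\ \sup\{I(c'):c'>c\}\cdot d_n - o(d_n)\] as $n\to\infty$ (with the obvious adjustments if $I(c)=-\infty$).
   Context: $\mathcal{S}_1(\mathfrak{A})$ is the state space of $\mathfrak{A}$ with the weak* topology; more generally $\mathfrak{B}(\mathfrak{A},\mathrm{M}_k)_+$ is the set of completely positive maps $\mathfrak{A}\to\mathrm{M}_k$ with the pointwise topology. A random AP sequence is a sequence of random unital $\ast$-representations $\pi_n$ on $\mathbf{C}^{d_n}$, $d_n\to\infty$. For a representation $\pi$ on $H$ and $O\subset\mathfrak{B}(\mathfrak{A},\mathrm{M}_k)_+$, $\mathcal{X}(\pi,O)$ is the set of $(v_1,\dots,v_k)\in H^k$ whose type $a\mapsto[\langle\pi(a)v_j,v_i\rangle]_{i,j}$ lies in $O$. $\mathrm{h}^0_{\boldsymbol{\pi}}(\phi):=\inf_O\limsup_n\frac1{d_n}\log\mathbf{P}(\mathcal{X}(\pi_n,O)\ne\emptyset)$,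 the infimum over neighbourhoods $O$ of $\phi$. $\boldsymbol{\pi}$ converges in the LD sense if for every $k$ and every $\phi\in\mathfrak{B}(\mathfrak{A},\mathrm{M}_k)_+$: (i) for every $a'>\mathrm{h}^0_{\boldsymbol{\pi}}(\phi)$ some open neighbourhood $O$ of $\phi$ has $\limsup_n\frac1{d_n}\log\mathbf{P}(\mathcal{X}(\pi_n,O)\ne\emptyset)<a'$, and (ii) every open neighbourhood $O$ of $\phi$ has $\liminf_n\frac1{d_n}\log\mathbf{P}(\mathcal{X}(\pi_n,O)\ne\emptyset)\ge\mathrm{h}^0_{\boldsymbol{\pi}}(\phi)$. *)

theory Defs
  imports "HOL-Probability.Probability" "Jordan_Normal_Form.Matrix"
begin

section \<open>Abstract unital C*-algebras (carrier = the whole type)\<close>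

record 'a cstar_alg =
  cadd  :: "'a \<Rightarrow> 'a \<Rightarrow> 'a"
  cmul  :: "'a \<Rightarrow> 'a \<Rightarrow> 'a"
  csmul :: "complex \<Rightarrow> 'a \<Rightarrow> 'a"
  czero :: 'a
  cone  :: 'a
  cstar :: "'a \<Rightarrow> 'a"
  cnorm :: "'a \<Rightarrow> real"

definition cminus :: "'a cstar_alg \<Rightarrow> 'a \<Rightarrow> 'a \<Rightarrow> 'a" where
  "cminus A x y = cadd A x (csmul A (-1) y)"

definition cstar_algebra :: "'a cstar_alg \<Rightarrow> bool" where
  "cstar_algebra A \<longleftrightarrow>
     \<comment> \<open>complex vector space\<close>
     (\<forall>x y z. cadd A (cadd A x y) z = cadd A x (cadd A y z)) \<and>
     (\<forall>x y. cadd A x y = cadd A y x) \<and>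
     (\<forall>x. cadd A x (czero A) = x) \<and>
     (\<forall>x. cadd A x (csmul A (-1) x) = czero A) \<and>
     (\<forall>x. csmul A 1 x = x) \<and>
     (\<forall>\<alpha> \<beta> x. csmul A (\<alpha> * \<beta>) x = csmul A \<alpha> (csmul A \<beta> x)) \<and>
     (\<forall>\<alpha> \<beta> x. csmul A (\<alpha> + \<beta>) x = cadd A (csmul A \<alpha> x) (csmul A \<beta> x)) \<and>
     (\<forall>\<alpha> x y. csmul A \<alpha> (cadd A x y) = cadd A (csmul A \<alpha> x) (csmul A \<alpha> y)) \<and>
     \<comment> \<open>unital associative algebra\<close>
     (\<forall>x y z. cmul A (cmul A x y) z = cmul A x (cmul A y z)) \<and>
     (\<forall>x y z. cmul A x (cadd A y z) = cadd A (cmul A x y) (cmul A x z)) \<and>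
     (\<forall>x y z. cmul A (cadd A x y) z = cadd A (cmul A x z) (cmul A y z)) \<and>
     (\<forall>\<alpha> x y. cmul A (csmul A \<alpha> x) y = csmul A \<alpha> (cmul A x y)) \<and>
     (\<forall>\<alpha> x y. cmul A x (csmul A \<alpha> y) = csmul A \<alpha> (cmul A x y)) \<and>
     (\<forall>x. cmul A (cone A) x = x \<and> cmul A x (cone A) = x) \<and>
     \<comment> \<open>involution\<close>
     (\<forall>x. cstar A (cstar A x) = x) \<and>
     (\<forall>x y. cstar A (cadd A x y) = cadd A (cstar A x) (cstar A y)) \<and>
     (\<forall>\<alpha> x. cstar A (csmul A \<alpha> x) = csmul A (cnj \<alpha>) (cstar A x)) \<and>
     (\<forall>x y. cstar A (cmul A x y) = cmul A (cstar A y) (cstar A x)) \<and>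
     \<comment> \<open>submultiplicative norm satisfying the C*-identity\<close>
     (\<forall>x. cnorm A x = 0 \<longleftrightarrow> x = czero A) \<and>
     (\<forall>x y. cnorm A (cadd A x y) \<le> cnorm A x + cnorm A y) \<and>
     (\<forall>\<alpha> x. cnorm A (csmul A \<alpha> x) = cmod \<alpha> * cnorm A x) \<and>
     (\<forall>x y. cnorm A (cmul A x y) \<le> cnorm A x * cnorm A y) \<and>
     (\<forall>x. cnorm A (cmul A (cstar A x) x) = (cnorm A x)\<^sup>2) \<and>
     \<comment> \<open>completeness\<close>
     (\<forall>s :: nat \<Rightarrow> 'a. (\<forall>e>0. \<exists>N. \<forall>m\<ge>N. \<forall>n\<ge>N. cnorm A (cminus A (s m) (s n)) < e)
         \<longrightarrow> (\<exists>l. (\<lambda>n. cnorm A (cminus A (s n) l)) \<longlonglongrightarrow> 0))"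

definition cstar_separable :: "'a cstar_alg \<Rightarrow> bool" where
  "cstar_separable A \<longleftrightarrow>
     (\<exists>D. countable D \<and> (\<forall>x. \<forall>e>0. \<exists>y\<in>D. cnorm A (cminus A x y) < e))"

definition cpositive :: "'a cstar_alg \<Rightarrow> 'a \<Rightarrow> bool" where
  "cpositive A x \<longleftrightarrow> (\<exists>b. x = cmul A (cstar A b) b)"

definition cplx_nonneg :: "complex \<Rightarrow> bool" where
  "cplx_nonneg z \<longleftrightarrow> Im z = 0 \<and> Re z \<ge> 0"

definition lin_map :: "'a cstar_alg \<Rightarrow> ('a \<Rightarrow> complex mat) \<Rightarrow> bool" where
  "lin_map A \<phi> \<longleftrightarrow> (\<forall>x y. \<phi> (cadd A x y) = \<phi> x + \<phi> y) \<and>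
                     (\<forall>\<alpha> x. \<phi> (csmul A \<alpha> x) = \<alpha> \<cdot>\<^sub>m \<phi> x)"

text \<open>Completely positive maps A -> M_k: linear, M_k-valued, and for every m the
  amplification to M_m(A) -> M_m(M_k) maps positive elements b* b (b in M_m(A))
  to positive semidefinite matrices.\<close>
definition cp_maps :: "'a cstar_alg \<Rightarrow> nat \<Rightarrow> ('a \<Rightarrow> complex mat) set" where
  "cp_maps A k = {\<phi>. lin_map A \<phi> \<and> (\<forall>x. \<phi> x \<in> carrier_mat k k) \<and>
     (\<forall>(m::nat) (b :: nat \<Rightarrow> nat \<Rightarrow> 'a) (w :: nat \<Rightarrow> nat \<Rightarrow> complex).
        let bb = (\<lambda>i j. foldr (cadd A) (map (\<lambda>l. cmul A (cstar A (b l i)) (b l j)) [0..<m]) (czero A))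
        in cplx_nonneg (\<Sum>i<m. \<Sum>j<m. \<Sum>r<k. \<Sum>s<k.
              cnj (w i r) * (\<phi> (bb i j) $$ (r, s)) * w j s))}"

definition states :: "'a cstar_alg \<Rightarrow> ('a \<Rightarrow> complex) set" where
  "states A = {\<phi>. (\<forall>x y. \<phi> (cadd A x y) = \<phi> x + \<phi> y) \<and>
                  (\<forall>\<alpha> x. \<phi> (csmul A \<alpha> x) = \<alpha> * \<phi> x) \<and>
                  (\<forall>b. cplx_nonneg (\<phi> (cmul A (cstar A b) b))) \<and>
                  \<phi> (cone A) = 1}"

definition state_as_cp :: "('a \<Rightarrow> complex) \<Rightarrow> ('a \<Rightarrow> complex mat)" where
  "state_as_cp \<phi> = (\<lambda>x. mat 1 1 (\<lambda>_. \<phi> x))"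

definition basic_nbhd :: "'a cstar_alg \<Rightarrow> nat \<Rightarrow> ('a \<Rightarrow> complex mat) \<Rightarrow> 'a set \<Rightarrow> real \<Rightarrow> ('a \<Rightarrow> complex mat) set" where
  "basic_nbhd A k \<phi> F e = {\<psi> \<in> cp_maps A k. \<forall>x\<in>F. \<forall>r<k. \<forall>s<k. cmod (\<psi> x $$ (r,s) - \<phi> x $$ (r,s)) < e}"

definition cp_nbhd :: "'a cstar_alg \<Rightarrow> nat \<Rightarrow> ('a \<Rightarrow> complex mat) \<Rightarrow> ('a \<Rightarrow> complex mat) set \<Rightarrow> bool" where
  "cp_nbhd A k \<phi> U \<longleftrightarrow> U \<subseteq> cp_maps A k \<and>
     (\<exists>F e. finite F \<and> e > 0 \<and> basic_nbhd A k \<phi> F e \<subseteq> U)"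

definition cp_open :: "'a cstar_alg \<Rightarrow> nat \<Rightarrow> ('a \<Rightarrow> complex mat) set \<Rightarrow> bool" where
  "cp_open A k U \<longleftrightarrow> U \<subseteq> cp_maps A k \<and> (\<forall>\<phi>\<in>U. cp_nbhd A k \<phi> U)"

definition unital_star_rep :: "'a cstar_alg \<Rightarrow> nat \<Rightarrow> ('a \<Rightarrow> complex mat) \<Rightarrow> bool" where
  "unital_star_rep A d \<pi> \<longleftrightarrow> (\<forall>x. \<pi> x \<in> carrier_mat d d) \<and> lin_map A \<pi> \<and>
     (\<forall>x y. \<pi> (cmul A x y) = \<pi> x * \<pi> y) \<and>
     \<pi> (cone A) = 1\<^sub>m d \<and>
     (\<forall>x. \<pi> (cstar A x) = mat d d (\<lambda>(i,j). cnj (\<pi> x $$ (j,i))))"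

definition cinner :: "complex vec \<Rightarrow> complex vec \<Rightarrow> complex" where
  "cinner u w = (\<Sum>i<dim_vec u. u $ i * cnj (w $ i))"

definition type_of :: "('a \<Rightarrow> complex mat) \<Rightarrow> complex vec list \<Rightarrow> ('a \<Rightarrow> complex mat)" where
  "type_of \<pi> vs = (\<lambda>x. mat (length vs) (length vs) (\<lambda>(i,j). cinner (\<pi> x *\<^sub>v (vs ! j)) (vs ! i)))"

definition Xset :: "nat \<Rightarrow> nat \<Rightarrow> ('a \<Rightarrow> complex mat) \<Rightarrow> ('a \<Rightarrow> complex mat) set \<Rightarrow> complex vec list set" where
  "Xset d k \<pi> U = {vs. length vs = k \<and> (\<forall>v\<in>set vs. v \<in> carrier_vec d) \<and> type_of \<pi> vs \<in> U}"

definition random_AP_seq :: "'a cstar_alg \<Rightarrow> 'w measure \<Rightarrow> (nat \<Rightarrow> nat) \<Rightarrow> (nat \<Rightarrow> 'w \<Rightarrow> 'a \<Rightarrow> complex mat) \<Rightarrow> bool" where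
  "random_AP_seq A M d \<pi> \<longleftrightarrow> prob_space M \<and> filterlim d at_top sequentially \<and>
     (\<forall>n. \<forall>\<omega>\<in>space M. unital_star_rep A (d n) (\<pi> n \<omega>)) \<and>
     (\<forall>n x i j. (\<lambda>\<omega>. \<pi> n \<omega> x $$ (i,j)) \<in> borel_measurable M)"

definition elog :: "real \<Rightarrow> ereal" where
  "elog p = (if p \<le> 0 then -\<infinity> else ereal (ln p))"

definition Pnonempty :: "'w measure \<Rightarrow> (nat \<Rightarrow> nat) \<Rightarrow> (nat \<Rightarrow> 'w \<Rightarrow> 'a \<Rightarrow> complex mat) \<Rightarrow> nat \<Rightarrow> ('a \<Rightarrow> complex mat) set \<Rightarrow> nat \<Rightarrow> real" where
  "Pnonempty M d \<pi> k U n = measure M {\<omega> \<in> space M. Xset (d n) k (\<pi> n \<omega>) U \<noteq> {}}"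

definition rate :: "'w measure \<Rightarrow> (nat \<Rightarrow> nat) \<Rightarrow> (nat \<Rightarrow> 'w \<Rightarrow> 'a \<Rightarrow> complex mat) \<Rightarrow> nat \<Rightarrow> ('a \<Rightarrow> complex mat) set \<Rightarrow> nat \<Rightarrow> ereal" where
  "rate M d \<pi> k U n = ereal (1 / real (d n)) * elog (Pnonempty M d \<pi> k U n)"

definition h0 :: "'a cstar_alg \<Rightarrow> 'w measure \<Rightarrow> (nat \<Rightarrow> nat) \<Rightarrow> (nat \<Rightarrow> 'w \<Rightarrow> 'a \<Rightarrow> complex mat) \<Rightarrow> nat \<Rightarrow> ('a \<Rightarrow> complex mat) \<Rightarrow> ereal" where
  "h0 A M d \<pi> k \<phi> = (INF U \<in> {U. cp_nbhd A k \<phi> U}. limsup (rate M d \<pi> k U))"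

definition LD_convergent :: "'a cstar_alg \<Rightarrow> 'w measure \<Rightarrow> (nat \<Rightarrow> nat) \<Rightarrow> (nat \<Rightarrow> 'w \<Rightarrow> 'a \<Rightarrow> complex mat) \<Rightarrow> bool" where
  "LD_convergent A M d \<pi> \<longleftrightarrow>
     (\<forall>k. \<forall>\<phi>\<in>cp_maps A k.
        (\<forall>a'. a' > h0 A M d \<pi> k \<phi> \<longrightarrow>
           (\<exists>U. cp_open A k U \<and> \<phi> \<in> U \<and> limsup (rate M d \<pi> k U) < a')) \<and>
        (\<forall>U. cp_open A k U \<and> \<phi> \<in> U \<longrightarrow> liminf (rate M d \<pi> k U) \<ge> h0 A M d \<pi> k \<phi>))"

definition vnorm :: "complex vec \<Rightarrow> real" where
  "vnorm v = sqrt (\<Sum>i<dim_vec v. (cmod (v $ i))\<^sup>2)"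

definition opnorm :: "complex mat \<Rightarrow> real" where
  "opnorm B = Sup {vnorm (B *\<^sub>v v) | v. v \<in> carrier_vec (dim_col B) \<and> vnorm v \<le> 1}"

definition I_fun :: "'a cstar_alg \<Rightarrow> 'w measure \<Rightarrow> (nat \<Rightarrow> nat) \<Rightarrow> (nat \<Rightarrow> 'w \<Rightarrow> 'a \<Rightarrow> complex mat) \<Rightarrow> 'a \<Rightarrow> real \<Rightarrow> ereal" where
  "I_fun A M d \<pi> a c = Sup {h0 A M d \<pi> 1 (state_as_cp \<phi>) | \<phi>. \<phi> \<in> states A \<and> Re (\<phi> a) \<ge> c}"

end

theory Submission
  imports Defs "Jordan_Normal_Form.Determinant"
begin

lemma cinner_carrier: "u \<in> carrier_vec n \<Longrightarrow> cinner u w = (\<Sum>i<n. u$i * cnj (w$i))"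
  unfolding cinner_def by simp

lemma vnorm_L2: "vnorm v = L2_set (\<lambda>i. cmod (v$i)) {..<dim_vec v}"
  unfolding vnorm_def L2_set_def by simp

lemma vnorm_nonneg[simp]: "vnorm v \<ge> 0"
  unfolding vnorm_def by (simp add: sum_nonneg)

lemma vnorm_sq: "(vnorm v)\<^sup>2 = (\<Sum>i<dim_vec v. (cmod (v$i))\<^sup>2)"
  unfolding vnorm_def by (simp add: sum_nonneg)

lemma cinner_self: "cinner v v = complex_of_real ((vnorm v)\<^sup>2)"
  unfolding cinner_def vnorm_sq of_real_sum by (rule sum.cong) (simp_all add: complex_norm_square[symmetric])

lemma cinner_self_Re: "Re (cinner v v) = (vnorm v)\<^sup>2"
  by (simp add: cinner_self)

lemma cinner_CS: assumes "dim_vec w = dim_vec u"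
  shows "cmod (cinner u w) \<le> vnorm u * vnorm w"
proof -
  have "cmod (cinner u w) \<le> (\<Sum>i<dim_vec u. cmod (u$i * cnj (w$i)))"
    unfolding cinner_def by (rule norm_sum)
  also have "\<dots> = (\<Sum>i<dim_vec u. \<bar>cmod (u$i)\<bar> * \<bar>cmod (w$i)\<bar>)"
    by (simp add: norm_mult)
  also have "\<dots> \<le> L2_set (\<lambda>i. cmod (u$i)) {..<dim_vec u} * L2_set (\<lambda>i. cmod (w$i)) {..<dim_vec u}"
    by (rule L2_set_mult_ineq)
  also have "\<dots> = vnorm u * vnorm w" using assms by (simp add: vnorm_L2)
  finally show ?thesis .
qed

lemma vnorm_smult: "vnorm (k \<cdot>\<^sub>v v) = cmod k * vnorm v"
proof -
  have "(vnorm (k \<cdot>\<^sub>v v))\<^sup>2 = (cmod k * vnorm v)\<^sup>2"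
    by (simp add: vnorm_sq power_mult_distrib norm_mult sum_distrib_left)
  thus ?thesis by (simp add: power2_eq_iff_nonneg)
qed

lemma vnorm_zero_iff: "vnorm v = 0 \<longleftrightarrow> (\<forall>i<dim_vec v. v$i = 0)"
  unfolding vnorm_def by (auto simp add: sum_nonneg_eq_0_iff)

lemma vnorm_le_sum: "vnorm v \<le> (\<Sum>i<dim_vec v. cmod (v$i))"
  unfolding vnorm_L2 by (rule L2_set_le_sum) simp

lemma vnorm_ge_entry: "i < dim_vec v \<Longrightarrow> cmod (v$i) \<le> vnorm v"
  unfolding vnorm_L2 by (rule member_le_L2_set) auto

lemma mat_vec_index: "i < dim_row B \<Longrightarrow> dim_vec v = dim_col B \<Longrightarrow>
    (B *\<^sub>v v) $ i = (\<Sum>j<dim_col B. B$$(i,j) * v$j)"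
  by (simp add: scalar_prod_def atLeast0LessThan)

definition mnorm :: "complex mat \<Rightarrow> real" where
  "mnorm B = (\<Sum>i<dim_row B. \<Sum>j<dim_col B. cmod (B$$(i,j)))"

lemma mnorm_nonneg[simp]: "mnorm B \<ge> 0"
  unfolding mnorm_def by (simp add: sum_nonneg)

lemma vnorm_mat_vec: assumes "dim_vec v = dim_col B"
  shows "vnorm (B *\<^sub>v v) \<le> mnorm B * vnorm v"
proof -
  have "vnorm (B *\<^sub>v v) \<le> (\<Sum>i<dim_row B. cmod ((B *\<^sub>v v)$i))"
    using vnorm_le_sum[of "B *\<^sub>v v"] by simp
  also have "\<dots> \<le> (\<Sum>i<dim_row B. \<Sum>j<dim_col B. cmod (B$$(i,j)) * vnorm v)"
  proof (rule sum_mono)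
    fix i assume i: "i \<in> {..<dim_row B}"
    have "cmod ((B *\<^sub>v v)$i) = cmod (\<Sum>j<dim_col B. B$$(i,j) * v$j)"
      using i assms by (simp add: mat_vec_index del: index_mult_mat_vec)
    also have "\<dots> \<le> (\<Sum>j<dim_col B. cmod (B$$(i,j) * v$j))" by (rule norm_sum)
    also have "\<dots> \<le> (\<Sum>j<dim_col B. cmod (B$$(i,j)) * vnorm v)"
      by (rule sum_mono) (use assms vnorm_ge_entry[of _ v] in \<open>auto simp: norm_mult intro!: mult_left_mono\<close>)
    finally show "cmod ((B *\<^sub>v v)$i) \<le> (\<Sum>j<dim_col B. cmod (B$$(i,j)) * vnorm v)" .
  qed
  also have "\<dots> = mnorm B * vnorm v"
    unfolding mnorm_def by (simp add: sum_distrib_right)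
  finally show ?thesis .
qed

definition adj :: "complex mat \<Rightarrow> complex mat" where
  "adj B = mat (dim_col B) (dim_row B) (\<lambda>(i,j). cnj (B$$(j,i)))"

lemma adj_carrier[simp]: "B \<in> carrier_mat n m \<Longrightarrow> adj B \<in> carrier_mat m n"
  unfolding adj_def by auto

lemma cinner_adj: assumes B: "B \<in> carrier_mat d d" and u: "u \<in> carrier_vec d" and w: "w \<in> carrier_vec d"
  shows "cinner (adj B *\<^sub>v u) w = cinner u (B *\<^sub>v w)"
proof -
  have "cinner (adj B *\<^sub>v u) w = (\<Sum>i<d. (\<Sum>j<d. cnj (B$$(j,i)) * u$j) * cnj (w$i))"
    using B u by (simp add: cinner_def mat_vec_index adj_def del: index_mult_mat_vec)
  also have "\<dots> = (\<Sum>i<d. \<Sum>j<d. u$j * cnj (B$$(j,i) * w$i))"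
    by (simp add: sum_distrib_right sum_distrib_left mult_ac)
  also have "\<dots> = (\<Sum>j<d. \<Sum>i<d. u$j * cnj (B$$(j,i) * w$i))"
    by (rule sum.swap)
  also have "\<dots> = cinner u (B *\<^sub>v w)"
    using B u w by (simp add: cinner_def mat_vec_index sum_distrib_left del: index_mult_mat_vec)
  finally show ?thesis .
qed

lemma cinner_add_left: "u \<in> carrier_vec n \<Longrightarrow> w \<in> carrier_vec n \<Longrightarrow>
   cinner (u + w) z = cinner u z + cinner w z"
  by (simp add: cinner_def sum.distrib algebra_simps)

lemma cinner_add_right: "u \<in> carrier_vec n \<Longrightarrow> w \<in> carrier_vec n \<Longrightarrow> z \<in> carrier_vec n \<Longrightarrow>
   cinner u (w + z) = cinner u w + cinner u z"
  by (simp add: cinner_def sum.distrib algebra_simps)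

lemma cinner_minus_left: "u \<in> carrier_vec n \<Longrightarrow> w \<in> carrier_vec n \<Longrightarrow>
   cinner (u - w) z = cinner u z - cinner w z"
  by (simp add: cinner_def sum_subtractf algebra_simps)

lemma cinner_minus_right: "u \<in> carrier_vec n \<Longrightarrow> w \<in> carrier_vec n \<Longrightarrow> z \<in> carrier_vec n \<Longrightarrow>
   cinner u (w - z) = cinner u w - cinner u z"
  by (simp add: cinner_def sum_subtractf algebra_simps)

lemma cinner_smult_left: "cinner (k \<cdot>\<^sub>v u) w = k * cinner u w"
  by (simp add: cinner_def sum_distrib_left algebra_simps)

lemma cinner_smult_right: "u \<in> carrier_vec n \<Longrightarrow> w \<in> carrier_vec n \<Longrightarrow>
   cinner u (k \<cdot>\<^sub>v w) = cnj k * cinner u w"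
  by (simp add: cinner_def sum_distrib_left algebra_simps)

lemma cinner_cnj: "u \<in> carrier_vec n \<Longrightarrow> w \<in> carrier_vec n \<Longrightarrow> cinner w u = cnj (cinner u w)"
  by (simp add: cinner_def mult.commute)



section \<open>Abstract C*-algebras\<close>

primrec cpow :: "'a cstar_alg \<Rightarrow> 'a \<Rightarrow> nat \<Rightarrow> 'a" where
  "cpow A x 0 = cone A"
| "cpow A x (Suc n) = cmul A x (cpow A x n)"

primrec ssum :: "'a cstar_alg \<Rightarrow> (nat \<Rightarrow> 'a) \<Rightarrow> nat \<Rightarrow> 'a" where
  "ssum A f 0 = czero A"
| "ssum A f (Suc n) = cadd A (ssum A f n) (f n)"

locale ca =
  fixes A :: "'a cstar_alg"
  assumes ax: "cstar_algebra A"
begin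

lemmas axc = ax[unfolded cstar_algebra_def]

abbreviation pl (infixl "\<boxplus>" 65) where "pl \<equiv> cadd A"
abbreviation ml (infixl "\<boxtimes>" 70) where "ml \<equiv> cmul A"
abbreviation sm (infixr "\<cdot>\<^sub>A" 75) where "sm \<equiv> csmul A"
abbreviation z0 where "z0 \<equiv> czero A"
abbreviation o1 where "o1 \<equiv> cone A"
abbreviation st where "st \<equiv> cstar A"
abbreviation nm where "nm \<equiv> cnorm A"
abbreviation mn (infixl "\<boxminus>" 65) where "mn \<equiv> cminus A"

lemma A_add_assoc: "(x \<boxplus> y) \<boxplus> z = x \<boxplus> (y \<boxplus> z)" using axc[THEN conjunct1] by blast
lemma A_add_comm: "x \<boxplus> y = y \<boxplus> x" using axc[THEN conjunct2, THEN conjunct1] by blast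
lemma A_add_0: "x \<boxplus> z0 = x" using axc[THEN conjunct2, THEN conjunct2, THEN conjunct1] by blast
lemma A_add_neg: "x \<boxplus> (-1) \<cdot>\<^sub>A x = z0" using axc[THEN conjunct2, THEN conjunct2, THEN conjunct2, THEN conjunct1] by blast
lemma A_smul_1: "1 \<cdot>\<^sub>A x = x" using axc[THEN conjunct2, THEN conjunct2, THEN conjunct2, THEN conjunct2, THEN conjunct1] by blast
lemma A_smul_smul: "(\<alpha> * \<beta>) \<cdot>\<^sub>A x = \<alpha> \<cdot>\<^sub>A (\<beta> \<cdot>\<^sub>A x)" using axc[THEN conjunct2, THEN conjunct2, THEN conjunct2, THEN conjunct2, THEN conjunct2, THEN conjunct1] by blast
lemma A_smul_add1: "(\<alpha> + \<beta>) \<cdot>\<^sub>A x = \<alpha> \<cdot>\<^sub>A x \<boxplus> \<beta> \<cdot>\<^sub>A x" using axc[THEN conjunct2, THEN conjunct2, THEN conjunct2, THEN conjunct2, THEN conjunct2, THEN conjunct2, THEN conjunct1] by blast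
lemma A_smul_add2: "\<alpha> \<cdot>\<^sub>A (x \<boxplus> y) = \<alpha> \<cdot>\<^sub>A x \<boxplus> \<alpha> \<cdot>\<^sub>A y" using axc[THEN conjunct2, THEN conjunct2, THEN conjunct2, THEN conjunct2, THEN conjunct2, THEN conjunct2, THEN conjunct2, THEN conjunct1] by blast
lemma A_mul_assoc: "(x \<boxtimes> y) \<boxtimes> z = x \<boxtimes> (y \<boxtimes> z)" using axc[THEN conjunct2, THEN conjunct2, THEN conjunct2, THEN conjunct2, THEN conjunct2, THEN conjunct2, THEN conjunct2, THEN conjunct2, THEN conjunct1] by blast
lemma A_distL: "x \<boxtimes> (y \<boxplus> z) = x \<boxtimes> y \<boxplus> x \<boxtimes> z" using axc[THEN conjunct2, THEN conjunct2, THEN conjunct2, THEN conjunct2, THEN conjunct2, THEN conjunct2, THEN conjunct2, THEN conjunct2, THEN conjunct2, THEN conjunct1] by blast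
lemma A_distR: "(x \<boxplus> y) \<boxtimes> z = x \<boxtimes> z \<boxplus> y \<boxtimes> z" using axc[THEN conjunct2, THEN conjunct2, THEN conjunct2, THEN conjunct2, THEN conjunct2, THEN conjunct2, THEN conjunct2, THEN conjunct2, THEN conjunct2, THEN conjunct2, THEN conjunct1] by blast
lemma A_mul_smul1: "(\<alpha> \<cdot>\<^sub>A x) \<boxtimes> y = \<alpha> \<cdot>\<^sub>A (x \<boxtimes> y)" using axc[THEN conjunct2, THEN conjunct2, THEN conjunct2, THEN conjunct2, THEN conjunct2, THEN conjunct2, THEN conjunct2, THEN conjunct2, THEN conjunct2, THEN conjunct2, THEN conjunct2, THEN conjunct1] by blast
lemma A_mul_smul2: "x \<boxtimes> (\<alpha> \<cdot>\<^sub>A y) = \<alpha> \<cdot>\<^sub>A (x \<boxtimes> y)" using axc[THEN conjunct2, THEN conjunct2, THEN conjunct2, THEN conjunct2, THEN conjunct2, THEN conjunct2, THEN conjunct2, THEN conjunct2, THEN conjunct2, THEN conjunct2, THEN conjunct2, THEN conjunct2, THEN conjunct1] by blast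
lemma A_one_mul: "o1 \<boxtimes> x = x" using axc[THEN conjunct2, THEN conjunct2, THEN conjunct2, THEN conjunct2, THEN conjunct2, THEN conjunct2, THEN conjunct2, THEN conjunct2, THEN conjunct2, THEN conjunct2, THEN conjunct2, THEN conjunct2, THEN conjunct2, THEN conjunct1] by blast
lemma A_mul_one: "x \<boxtimes> o1 = x" using axc[THEN conjunct2, THEN conjunct2, THEN conjunct2, THEN conjunct2, THEN conjunct2, THEN conjunct2, THEN conjunct2, THEN conjunct2, THEN conjunct2, THEN conjunct2, THEN conjunct2, THEN conjunct2, THEN conjunct2, THEN conjunct1] by blast
lemma A_star_star: "st (st x) = x" using axc[THEN conjunct2, THEN conjunct2, THEN conjunct2, THEN conjunct2, THEN conjunct2, THEN conjunct2, THEN conjunct2, THEN conjunct2, THEN conjunct2, THEN conjunct2, THEN conjunct2, THEN conjunct2, THEN conjunct2, THEN conjunct2, THEN conjunct1] by blast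
lemma A_star_add: "st (x \<boxplus> y) = st x \<boxplus> st y" using axc[THEN conjunct2, THEN conjunct2, THEN conjunct2, THEN conjunct2, THEN conjunct2, THEN conjunct2, THEN conjunct2, THEN conjunct2, THEN conjunct2, THEN conjunct2, THEN conjunct2, THEN conjunct2, THEN conjunct2, THEN conjunct2, THEN conjunct2, THEN conjunct1] by blast
lemma A_star_smul: "st (\<alpha> \<cdot>\<^sub>A x) = cnj \<alpha> \<cdot>\<^sub>A st x" using axc[THEN conjunct2, THEN conjunct2, THEN conjunct2, THEN conjunct2, THEN conjunct2, THEN conjunct2, THEN conjunct2, THEN conjunct2, THEN conjunct2, THEN conjunct2, THEN conjunct2, THEN conjunct2, THEN conjunct2, THEN conjunct2, THEN conjunct2, THEN conjunct2, THEN conjunct1] by blast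
lemma A_star_mul: "st (x \<boxtimes> y) = st y \<boxtimes> st x" using axc[THEN conjunct2, THEN conjunct2, THEN conjunct2, THEN conjunct2, THEN conjunct2, THEN conjunct2, THEN conjunct2, THEN conjunct2, THEN conjunct2, THEN conjunct2, THEN conjunct2, THEN conjunct2, THEN conjunct2, THEN conjunct2, THEN conjunct2, THEN conjunct2, THEN conjunct2, THEN conjunct1] by blast
lemma A_norm_0_iff: "nm x = 0 \<longleftrightarrow> x = z0" using axc[THEN conjunct2, THEN conjunct2, THEN conjunct2, THEN conjunct2, THEN conjunct2, THEN conjunct2, THEN conjunct2, THEN conjunct2, THEN conjunct2, THEN conjunct2, THEN conjunct2, THEN conjunct2, THEN conjunct2, THEN conjunct2, THEN conjunct2, THEN conjunct2, THEN conjunct2, THEN conjunct2, THEN conjunct1] by blast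
lemma A_norm_tri: "nm (x \<boxplus> y) \<le> nm x + nm y" using axc[THEN conjunct2, THEN conjunct2, THEN conjunct2, THEN conjunct2, THEN conjunct2, THEN conjunct2, THEN conjunct2, THEN conjunct2, THEN conjunct2, THEN conjunct2, THEN conjunct2, THEN conjunct2, THEN conjunct2, THEN conjunct2, THEN conjunct2, THEN conjunct2, THEN conjunct2, THEN conjunct2, THEN conjunct2, THEN conjunct1] by blast
lemma A_norm_smul: "nm (\<alpha> \<cdot>\<^sub>A x) = cmod \<alpha> * nm x" using axc[THEN conjunct2, THEN conjunct2, THEN conjunct2, THEN conjunct2, THEN conjunct2, THEN conjunct2, THEN conjunct2, THEN conjunct2, THEN conjunct2, THEN conjunct2, THEN conjunct2, THEN conjunct2, THEN conjunct2, THEN conjunct2, THEN conjunct2, THEN conjunct2, THEN conjunct2, THEN conjunct2, THEN conjunct2, THEN conjunct2, THEN conjunct1] by blast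
lemma A_norm_mul: "nm (x \<boxtimes> y) \<le> nm x * nm y" using axc[THEN conjunct2, THEN conjunct2, THEN conjunct2, THEN conjunct2, THEN conjunct2, THEN conjunct2, THEN conjunct2, THEN conjunct2, THEN conjunct2, THEN conjunct2, THEN conjunct2, THEN conjunct2, THEN conjunct2, THEN conjunct2, THEN conjunct2, THEN conjunct2, THEN conjunct2, THEN conjunct2, THEN conjunct2, THEN conjunct2, THEN conjunct2, THEN conjunct1] by blast
lemma A_norm_cstar: "nm (st x \<boxtimes> x) = (nm x)\<^sup>2" using axc[THEN conjunct2, THEN conjunct2, THEN conjunct2, THEN conjunct2, THEN conjunct2, THEN conjunct2, THEN conjunct2, THEN conjunct2, THEN conjunct2, THEN conjunct2, THEN conjunct2, THEN conjunct2, THEN conjunct2, THEN conjunct2, THEN conjunct2, THEN conjunct2, THEN conjunct2, THEN conjunct2, THEN conjunct2, THEN conjunct2, THEN conjunct2, THEN conjunct2, THEN conjunct1] by blast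
lemma A_complete: "(\<forall>e>0. \<exists>N. \<forall>m\<ge>N. \<forall>n\<ge>N. nm (s m \<boxminus> s n) < e)
         \<Longrightarrow> (\<exists>l. (\<lambda>n. nm (s n \<boxminus> l)) \<longlonglongrightarrow> 0)" using axc[THEN conjunct2, THEN conjunct2, THEN conjunct2, THEN conjunct2, THEN conjunct2, THEN conjunct2, THEN conjunct2, THEN conjunct2, THEN conjunct2, THEN conjunct2, THEN conjunct2, THEN conjunct2, THEN conjunct2, THEN conjunct2, THEN conjunct2, THEN conjunct2, THEN conjunct2, THEN conjunct2, THEN conjunct2, THEN conjunct2, THEN conjunct2, THEN conjunct2, THEN conjunct2] by blast

lemma A_add_lcomm: "x \<boxplus> (y \<boxplus> z) = y \<boxplus> (x \<boxplus> z)"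
  by (simp only: A_add_assoc[symmetric] A_add_comm[of x y])

lemmas A_ac = A_add_assoc A_add_comm A_add_lcomm

lemma A_0_add: "z0 \<boxplus> x = x" by (simp only: A_add_comm[of "z0" x] A_add_0)

lemma A_cancel0: assumes "y \<boxplus> z = y" shows "z = z0"
proof -
  have "z = ((-1) \<cdot>\<^sub>A y \<boxplus> y) \<boxplus> z" by (simp only: A_add_comm[of "(-1) \<cdot>\<^sub>A y" y] A_add_neg A_0_add)
  also have "\<dots> = (-1) \<cdot>\<^sub>A y \<boxplus> y" by (simp add: A_add_assoc assms)
  also have "\<dots> = z0" by (simp only: A_add_comm[of "(-1) \<cdot>\<^sub>A y" y] A_add_neg)
  finally show ?thesis .
qed

lemma A_cancel: assumes "x \<boxplus> y = x \<boxplus> z" shows "y = z"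
proof -
  have "y = ((-1) \<cdot>\<^sub>A x \<boxplus> x) \<boxplus> y" by (simp only: A_add_comm[of "(-1) \<cdot>\<^sub>A x" x] A_add_neg A_0_add)
  also have "\<dots> = (-1) \<cdot>\<^sub>A x \<boxplus> (x \<boxplus> z)" by (simp add: A_add_assoc assms)
  also have "\<dots> = z" by (simp only: A_add_assoc[symmetric] A_add_comm[of "(-1) \<cdot>\<^sub>A x" x] A_add_neg A_0_add)
  finally show ?thesis .
qed

lemma A_smul_0[simp]: "0 \<cdot>\<^sub>A x = z0"
  by (rule A_cancel0[of "0 \<cdot>\<^sub>A x"]) (simp flip: A_smul_add1)

lemma A_smul_z[simp]: "\<alpha> \<cdot>\<^sub>A z0 = z0"
  by (rule A_cancel0[of "\<alpha> \<cdot>\<^sub>A z0"]) (simp add: A_add_0 flip: A_smul_add2)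

lemma A_mul_z[simp]: "x \<boxtimes> z0 = z0"
proof -
  have "x \<boxtimes> z0 = x \<boxtimes> (0 \<cdot>\<^sub>A z0)" by simp
  also have "\<dots> = 0 \<cdot>\<^sub>A (x \<boxtimes> z0)" by (rule A_mul_smul2)
  finally show ?thesis by simp
qed

lemma A_z_mul[simp]: "z0 \<boxtimes> x = z0"
proof -
  have "z0 \<boxtimes> x = (0 \<cdot>\<^sub>A z0) \<boxtimes> x" by simp
  also have "\<dots> = 0 \<cdot>\<^sub>A (z0 \<boxtimes> x)" by (rule A_mul_smul1)
  finally show ?thesis by simp
qed

lemma A_star_z[simp]: "st z0 = z0"
proof -
  have "st z0 = st (0 \<cdot>\<^sub>A z0)" by simp
  also have "\<dots> = 0 \<cdot>\<^sub>A st z0" by (simp only: A_star_smul complex_cnj_zero)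
  finally show ?thesis by simp
qed

lemma A_star_one[simp]: "st o1 = o1"
proof -
  have e: "st o1 \<boxtimes> o1 = st o1" by (rule A_mul_one)
  have "st (st o1 \<boxtimes> o1) = st o1 \<boxtimes> o1" by (simp only: A_star_mul A_star_star)
  hence "st (st o1) = st o1" by (simp only: e)
  thus ?thesis by (simp only: A_star_star)
qed

lemma A_norm_z[simp]: "nm z0 = 0" using A_norm_0_iff by blast

lemma A_norm_nonneg[simp]: "nm x \<ge> 0"
proof -
  have "0 = nm (x \<boxplus> (-1) \<cdot>\<^sub>A x)" by (simp add: A_add_neg)
  also have "\<dots> \<le> 2 * nm x" using A_norm_tri[of x "(-1) \<cdot>\<^sub>A x"] by (simp add: A_norm_smul)
  finally show ?thesis by simp
qed

lemma A_norm_star[simp]: "nm (st x) = nm x"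
proof -
  have le: "nm y \<le> nm (st y)" for y
  proof (cases "nm y = 0")
    case False
    hence "nm y > 0" using A_norm_nonneg[of y] by linarith
    have "(nm y)\<^sup>2 \<le> nm (st y) * nm y" using A_norm_cstar[of y] A_norm_mul[of "st y" y] by simp
    thus ?thesis using \<open>nm y > 0\<close> by (simp add: power2_eq_square)
  qed simp
  show ?thesis using le[of x] le[of "st x"] by (simp add: A_star_star)
qed

lemma A_norm_one: "nm o1 \<le> 1"
proof -
  have "(nm o1)\<^sup>2 = nm o1" using A_norm_cstar[of "o1"] by (simp add: A_mul_one)
  hence "nm o1 = 0 \<or> nm o1 = 1" by (simp add: power2_eq_square)
  thus ?thesis by auto
qed

lemma A_neg_neg: "(-1) \<cdot>\<^sub>A ((-1) \<cdot>\<^sub>A x) = x"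
  by (simp add: A_smul_1 flip: A_smul_smul)

lemma A_mn_def: "x \<boxminus> y = x \<boxplus> (-1) \<cdot>\<^sub>A y" by (simp add: cminus_def)

lemma A_mn_self[simp]: "x \<boxminus> x = z0" by (simp add: A_mn_def A_add_neg)

lemma A_mn_z: "x \<boxminus> z0 = x" by (simp add: A_mn_def A_add_0)

lemma A_mn_eq0: "x \<boxminus> y = z0 \<Longrightarrow> x = y"
proof -
  assume h: "x \<boxminus> y = z0"
  have "x = (x \<boxplus> (-1) \<cdot>\<^sub>A y) \<boxplus> y"
    by (simp only: A_add_assoc A_add_comm[of "(-1) \<cdot>\<^sub>A y" y] A_add_neg A_add_0)
  also have "\<dots> = y" using h by (simp add: A_mn_def A_0_add)
  finally show "x = y" .
qed

lemma A_mn_swap: "y \<boxminus> x = (-1) \<cdot>\<^sub>A (x \<boxminus> y)"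
  by (simp add: A_mn_def A_smul_add2 A_neg_neg A_add_comm)

lemma A_norm_neg[simp]: "nm ((-1) \<cdot>\<^sub>A x) = nm x" by (simp add: A_norm_smul)

lemma A_norm_mn_swap: "nm (y \<boxminus> x) = nm (x \<boxminus> y)"
  by (subst A_mn_swap) (rule A_norm_neg)

lemma A_mn_split: "x \<boxminus> z = (x \<boxminus> y) \<boxplus> (y \<boxminus> z)"
proof -
  have "(x \<boxminus> y) \<boxplus> (y \<boxminus> z) = x \<boxplus> ((-1) \<cdot>\<^sub>A y \<boxplus> y) \<boxplus> (-1) \<cdot>\<^sub>A z"
    by (simp add: A_mn_def A_ac)
  also have "\<dots> = x \<boxminus> z" by (simp only: A_add_comm[of "(-1) \<cdot>\<^sub>A y" y] A_add_neg A_add_0 A_mn_def)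
  finally show ?thesis by simp
qed

lemma A_norm_mn_tri: "nm (x \<boxminus> z) \<le> nm (x \<boxminus> y) + nm (y \<boxminus> z)"
  by (subst A_mn_split[of x z y]) (rule A_norm_tri)

lemma A_mn_add: "(x \<boxplus> y) \<boxminus> x = y"
  by (simp only: A_mn_def A_add_comm[of x y] A_add_assoc A_add_neg A_add_0)

lemma A_mn_cancel_left: "(u \<boxminus> p) \<boxminus> u = (-1) \<cdot>\<^sub>A p"
  by (simp only: A_mn_def A_add_comm[of u "(-1) \<cdot>\<^sub>A p"] A_add_assoc A_add_neg A_add_0)

lemma A_smul_neg1: "(-1) \<cdot>\<^sub>A x = (-1::complex) \<cdot>\<^sub>A x" ..

lemma A_mul_mn_left: "z \<boxtimes> (x \<boxminus> y) = z \<boxtimes> x \<boxminus> z \<boxtimes> y"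
  by (simp add: A_mn_def A_distL A_mul_smul2)

lemma A_mul_mn_right: "(x \<boxminus> y) \<boxtimes> z = x \<boxtimes> z \<boxminus> y \<boxtimes> z"
  by (simp add: A_mn_def A_distR A_mul_smul1)

lemma A_star_mn: "st (x \<boxminus> y) = st x \<boxminus> st y"
  by (simp add: A_mn_def A_star_add A_star_smul)

lemma A_smul_mn: "\<alpha> \<cdot>\<^sub>A (x \<boxminus> y) = \<alpha> \<cdot>\<^sub>A x \<boxminus> \<alpha> \<cdot>\<^sub>A y"
  by (simp add: A_mn_def A_smul_add2 flip: A_smul_smul)

lemma A_norm_self_adj: "st h = h \<Longrightarrow> nm (h \<boxtimes> h) = (nm h)\<^sup>2"
  using A_norm_cstar[of h] by simp

lemma ssum_norm: "nm (ssum A f n) \<le> (\<Sum>k<n. nm (f k))"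
proof (induction n)
  case (Suc n) thus ?case using A_norm_tri[of "ssum A f n" "f n"] by simp
qed simp

lemma ssum_shift: "ssum A f (n + j) = ssum A f n \<boxplus> ssum A (\<lambda>k. f (n + k)) j"
proof (induction j)
  case 0 thus ?case by (simp add: A_add_0)
next
  case (Suc j) thus ?case by (simp add: A_add_assoc)
qed

lemma cpow_norm: "nm (cpow A x k) \<le> (nm x)^k"
proof (induction k)
  case 0 thus ?case using A_norm_one by simp
next
  case (Suc k)
  have "nm (cpow A x (Suc k)) \<le> nm x * nm (cpow A x k)" using A_norm_mul by simp
  also have "\<dots> \<le> nm x * (nm x)^k" using Suc by (simp add: mult_left_mono)
  finally show ?case by simp
qed

lemma geom_tail_bound:
  fixes q :: real assumes "0 \<le> q" "q < 1"
  shows "(\<Sum>k<j. q^(n+k)) \<le> q^n / (1 - q)"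
proof -
  have "(\<Sum>k<j. q^(n+k)) = q^n * (\<Sum>k<j. q^k)" by (simp add: power_add sum_distrib_left)
  also have "(\<Sum>k<j. q^k) = (1 - q^j) / (1 - q)" using assms by (simp add: sum_gp_strict)
  also have "\<dots> \<le> 1 / (1 - q)" using assms by (simp add: divide_right_mono)
  finally have "(\<Sum>k<j. q^(n+k)) \<le> q^n * (1 / (1 - q))"
    using assms by (simp add: mult_left_mono)
  thus ?thesis by simp
qed

lemma neumann_telescope: "(o1 \<boxminus> x) \<boxtimes> ssum A (cpow A x) n = o1 \<boxminus> cpow A x n"
proof (induction n)
  case 0 show ?case by (simp only: ssum.simps cpow.simps A_mul_z A_mn_self)
next
  case (Suc n)
  have "(o1 \<boxminus> x) \<boxtimes> ssum A (cpow A x) (Suc n)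
      = (o1 \<boxminus> x) \<boxtimes> ssum A (cpow A x) n \<boxplus> (o1 \<boxminus> x) \<boxtimes> cpow A x n"
    by (simp only: ssum.simps A_distL)
  also have "\<dots> = (o1 \<boxminus> cpow A x n) \<boxplus> (cpow A x n \<boxminus> x \<boxtimes> cpow A x n)"
    by (simp only: Suc.IH) (simp only: A_mul_mn_right A_one_mul)
  also have "\<dots> = o1 \<boxminus> cpow A x (Suc n)" unfolding cpow.simps by (rule A_mn_split[symmetric])
  finally show ?case .
qed

lemma neumann:
  assumes "nm x < 1"
  shows "\<exists>r. (o1 \<boxminus> x) \<boxtimes> r = o1"
proof -
  define q where "q = nm x"
  have q0: "0 \<le> q" and q1: "q < 1" using assms by (auto simp: q_def)
  define s where "s = ssum A (cpow A x)"
  have tail: "nm (s m \<boxminus> s n) \<le> q^n / (1 - q)" if "n \<le> m" for m n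
  proof -
    obtain j where m: "m = n + j" using \<open>n \<le> m\<close> le_Suc_ex by blast
    have "s m \<boxminus> s n = ssum A (\<lambda>k. cpow A x (n + k)) j"
      unfolding s_def m ssum_shift by (simp add: A_mn_add)
    hence "nm (s m \<boxminus> s n) \<le> (\<Sum>k<j. nm (cpow A x (n + k)))" using ssum_norm by simp
    also have "\<dots> \<le> (\<Sum>k<j. q^(n+k))" by (rule sum_mono) (simp add: cpow_norm q_def)
    also have "\<dots> \<le> q^n / (1 - q)" using geom_tail_bound[OF q0 q1] .
    finally show ?thesis .
  qed
  have qn: "(\<lambda>n. q^n / (1 - q)) \<longlonglongrightarrow> 0"
    using q0 q1 by (intro tendsto_divide_zero LIMSEQ_realpow_zero) auto
  have "\<forall>e>0. \<exists>N. \<forall>m\<ge>N. \<forall>n\<ge>N. nm (s m \<boxminus> s n) < e"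
  proof (intro allI impI)
    fix e :: real assume "e > 0"
    then obtain N where N: "\<forall>n\<ge>N. q^n / (1 - q) < e"
      using order_tendstoD(2)[OF qn \<open>e > 0\<close>] unfolding eventually_sequentially by blast
    have "nm (s m \<boxminus> s n) < e" if "m \<ge> N" "n \<ge> N" for m n
    proof (cases "n \<le> m")
      case True thus ?thesis using tail[OF True] N that by fastforce
    next
      case False thus ?thesis using tail[of m n] N that A_norm_mn_swap[of "s m" "s n"] by fastforce
    qed
    thus "\<exists>N. \<forall>m\<ge>N. \<forall>n\<ge>N. nm (s m \<boxminus> s n) < e" by blast
  qed
  then obtain r where r: "(\<lambda>n. nm (s n \<boxminus> r)) \<longlonglongrightarrow> 0" using A_complete by blast
  define y where "y = o1 \<boxminus> x"
  have bound: "nm (y \<boxtimes> r \<boxminus> o1) \<le> nm y * nm (s n \<boxminus> r) + q^n" for n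
  proof -
    have "y \<boxtimes> r \<boxminus> o1 = (y \<boxtimes> r \<boxminus> y \<boxtimes> s n) \<boxplus> (y \<boxtimes> s n \<boxminus> o1)" by (rule A_mn_split)
    also have "y \<boxtimes> r \<boxminus> y \<boxtimes> s n = y \<boxtimes> (r \<boxminus> s n)" by (simp add: A_mul_mn_left)
    also have "y \<boxtimes> s n \<boxminus> o1 = (-1) \<cdot>\<^sub>A cpow A x n"
      unfolding y_def s_def neumann_telescope by (rule A_mn_cancel_left)
    finally have eq: "y \<boxtimes> r \<boxminus> o1 = y \<boxtimes> (r \<boxminus> s n) \<boxplus> (-1) \<cdot>\<^sub>A cpow A x n" .
    have "nm (y \<boxtimes> r \<boxminus> o1) \<le> nm (y \<boxtimes> (r \<boxminus> s n)) + nm (cpow A x n)"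
      unfolding eq using A_norm_tri[of "y \<boxtimes> (r \<boxminus> s n)" "(-1) \<cdot>\<^sub>A cpow A x n"] by simp
    also have "\<dots> \<le> nm y * nm (r \<boxminus> s n) + q^n"
      using A_norm_mul[of y "r \<boxminus> s n"] cpow_norm[of x n] unfolding q_def by (rule add_mono)
    finally show ?thesis by (simp add: A_norm_mn_swap)
  qed
  have lim: "(\<lambda>n. nm y * nm (s n \<boxminus> r) + q^n) \<longlonglongrightarrow> 0"
    using r q0 q1 by (auto intro!: tendsto_add_zero tendsto_mult_right_zero LIMSEQ_realpow_zero)
  have "nm (y \<boxtimes> r \<boxminus> o1) \<le> 0"
    by (rule LIMSEQ_le_const[OF lim]) (use bound in auto)
  hence "y \<boxtimes> r \<boxminus> o1 = z0" using A_norm_nonneg A_norm_0_iff by (meson antisym)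
  hence "y \<boxtimes> r = o1" by (rule A_mn_eq0)
  thus ?thesis unfolding y_def by blast
qed

end


section \<open>Representations\<close>

definition qf :: "complex mat \<Rightarrow> complex vec \<Rightarrow> complex" where
  "qf B v = cinner (B *\<^sub>v v) v"

lemma mv_smult: "B \<in> carrier_mat n n \<Longrightarrow> v \<in> carrier_vec n \<Longrightarrow> (k \<cdot>\<^sub>m B) *\<^sub>v v = k \<cdot>\<^sub>v (B *\<^sub>v v)"
  by (intro eq_vecI) (auto simp: mat_vec_index sum_distrib_left mult.assoc simp del: index_mult_mat_vec)

lemma qf_bound: "B \<in> carrier_mat n n \<Longrightarrow> v \<in> carrier_vec n \<Longrightarrow> cmod (qf B v) \<le> mnorm B * (vnorm v)\<^sup>2"
proof -
  assume B: "B \<in> carrier_mat n n" and v: "v \<in> carrier_vec n"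
  have "cmod (qf B v) \<le> vnorm (B *\<^sub>v v) * vnorm v" unfolding qf_def
    by (rule cinner_CS) (use B v in auto)
  also have "\<dots> \<le> mnorm B * vnorm v * vnorm v"
    by (rule mult_right_mono) (use B v vnorm_mat_vec in auto)
  finally show ?thesis by (simp add: power2_eq_square mult.assoc)
qed

lemma qf_scale: "B \<in> carrier_mat n n \<Longrightarrow> v \<in> carrier_vec n \<Longrightarrow>
   qf B (complex_of_real t \<cdot>\<^sub>v v) = complex_of_real (t^2) * qf B v"
  unfolding qf_def
  by (simp add: mult_mat_vec cinner_smult_left cinner_smult_right[of _ n] power2_eq_square)

lemma unit_scale: assumes v: "v \<in> carrier_vec n" and nz: "vnorm v \<noteq> 0"
  shows "vnorm (complex_of_real (1 / vnorm v) \<cdot>\<^sub>v v) = 1"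
  using nz vnorm_nonneg[of v] by (simp add: vnorm_smult norm_divide)

lemma qf_from_unit:
  assumes B: "B \<in> carrier_mat n n"
    and H: "\<And>u. u \<in> carrier_vec n \<Longrightarrow> vnorm u = 1 \<Longrightarrow> Re (qf B u) \<le> L"
    and v: "v \<in> carrier_vec n"
  shows "Re (qf B v) \<le> L * (vnorm v)\<^sup>2"
proof (cases "vnorm v = 0")
  case True
  hence "\<forall>i<n. v$i = 0" using v vnorm_zero_iff by auto
  hence "qf B v = 0" using v B by (auto simp: qf_def cinner_def intro!: sum.neutral)
  thus ?thesis using True by simp
next
  case False
  define u where "u = complex_of_real (1 / vnorm v) \<cdot>\<^sub>v v"
  have u: "u \<in> carrier_vec n" "vnorm u = 1" using unit_scale[OF v False] v by (auto simp: u_def)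
  have "complex_of_real (vnorm v) \<cdot>\<^sub>v u = (complex_of_real (vnorm v) * complex_of_real (1 / vnorm v)) \<cdot>\<^sub>v v"
    unfolding u_def by (rule smult_smult_assoc)
  also have "\<dots> = v" using False by simp
  finally have "v = complex_of_real (vnorm v) \<cdot>\<^sub>v u" by simp
  hence "qf B v = complex_of_real ((vnorm v)^2) * qf B u" using qf_scale[OF B u(1)] by metis
  hence "Re (qf B v) = (vnorm v)^2 * Re (qf B u)" by simp
  also have "\<dots> \<le> (vnorm v)^2 * L" using H[OF u] by (simp add: mult_left_mono)
  finally show ?thesis by (simp add: mult.commute)
qed

locale rep = ca +
  fixes d :: nat and \<rho> :: "'a \<Rightarrow> complex mat"
  assumes usr: "unital_star_rep A d \<rho>"
begin

lemma R_carrier[simp]: "\<rho> x \<in> carrier_mat d d" using usr unfolding unital_star_rep_def by blast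
lemma R_dims[simp]: "dim_row (\<rho> x) = d" "dim_col (\<rho> x) = d" using R_carrier[of x] unfolding carrier_mat_def by auto
lemma R_mv_carrier[simp]: "v \<in> carrier_vec d \<Longrightarrow> \<rho> z *\<^sub>v v \<in> carrier_vec d"
  by (rule mult_mat_vec_carrier[OF R_carrier])
lemma R_add: "\<rho> (x \<boxplus> y) = \<rho> x + \<rho> y" using usr unfolding unital_star_rep_def lin_map_def by blast
lemma R_smul: "\<rho> (\<alpha> \<cdot>\<^sub>A x) = \<alpha> \<cdot>\<^sub>m \<rho> x" using usr unfolding unital_star_rep_def lin_map_def by blast
lemma R_mul: "\<rho> (x \<boxtimes> y) = \<rho> x * \<rho> y" using usr unfolding unital_star_rep_def by blast
lemma R_one: "\<rho> o1 = 1\<^sub>m d" using usr unfolding unital_star_rep_def by blast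
lemma R_star: "\<rho> (st x) = adj (\<rho> x)"
  using usr unfolding unital_star_rep_def adj_def by simp

lemma R_qf_add: "v \<in> carrier_vec d \<Longrightarrow> qf (\<rho> (x \<boxplus> y)) v = qf (\<rho> x) v + qf (\<rho> y) v"
  by (simp add: qf_def R_add add_mult_distrib_mat_vec[of _ d d] cinner_add_left[of _ d])

lemma R_qf_smul: "v \<in> carrier_vec d \<Longrightarrow> qf (\<rho> (\<alpha> \<cdot>\<^sub>A x)) v = \<alpha> * qf (\<rho> x) v"
  by (simp add: qf_def R_smul mv_smult[of _ d] cinner_smult_left)

lemma R_qf_one: "v \<in> carrier_vec d \<Longrightarrow> qf (\<rho> o1) v = complex_of_real ((vnorm v)\<^sup>2)"
  by (simp add: qf_def R_one cinner_self)

lemma R_qf_pos: "v \<in> carrier_vec d \<Longrightarrow> qf (\<rho> (st z \<boxtimes> z)) v = complex_of_real ((vnorm (\<rho> z *\<^sub>v v))\<^sup>2)"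
proof -
  assume v: "v \<in> carrier_vec d"
  have "qf (\<rho> (st z \<boxtimes> z)) v = cinner (adj (\<rho> z) *\<^sub>v (\<rho> z *\<^sub>v v)) v"
    using v by (simp add: qf_def R_mul R_star assoc_mult_mat_vec[of _ d d _ d])
  also have "\<dots> = cinner (\<rho> z *\<^sub>v v) (\<rho> z *\<^sub>v v)"
    by (rule cinner_adj) (use v in auto)
  finally show ?thesis by (simp add: cinner_self)
qed

lemma key_bound:
  assumes v: "v \<in> carrier_vec d"
  shows "Re (qf (\<rho> (st z \<boxtimes> z)) v) \<le> nm (st z \<boxtimes> z) * (vnorm v)\<^sup>2"
proof -
  define p where "p = st z \<boxtimes> z"
  define P where "P = \<rho> p"
  have P: "P \<in> carrier_mat d d" by (simp add: P_def)
  have stp: "st p = p" by (simp add: p_def A_star_mul A_star_star)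
  have unit_claim: "Re (qf P u) \<le> nm p" if u: "u \<in> carrier_vec d" "vnorm u = 1" for u
  proof -
    define S where "S = {Re (qf P w) | w. w \<in> carrier_vec d \<and> vnorm w = 1}"
    have Sne: "S \<noteq> {}" using u by (auto simp: S_def)
    have Sbd: "s \<le> mnorm P" if "s \<in> S" for s
    proof -
      from that obtain w where w: "w \<in> carrier_vec d" "vnorm w = 1" "s = Re (qf P w)" by (auto simp: S_def)
      have "s \<le> cmod (qf P w)" using w(3) complex_Re_le_cmod by blast
      also have "\<dots> \<le> mnorm P" using qf_bound[OF P w(1)] w(2) by simp
      finally show ?thesis .
    qed
    have bdd: "bdd_above S" using Sbd by (auto simp: bdd_above_def)
    define \<mu> where "\<mu> = Sup S"
    have le_mu: "Re (qf P w) \<le> \<mu>" if "w \<in> carrier_vec d" "vnorm w = 1" for w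
      unfolding \<mu>_def by (rule cSup_upper[OF _ bdd]) (use that in \<open>auto simp: S_def\<close>)
    have "\<mu> \<le> nm p"
    proof (rule ccontr)
      assume "\<not> \<mu> \<le> nm p"
      hence mu_gt: "\<mu> > nm p" by simp
      hence mu_pos: "\<mu> > 0" using A_norm_nonneg[of p] by linarith
      define x where "x = complex_of_real (1/\<mu>) \<cdot>\<^sub>A p"
      have "nm x = nm p / \<mu>" using mu_pos by (simp add: x_def A_norm_smul norm_divide)
      hence "nm x < 1" using mu_gt mu_pos by (simp add: divide_less_eq)
      then obtain r where r: "(o1 \<boxminus> x) \<boxtimes> r = o1" using neumann by blast
      define Q where "Q = \<rho> (o1 \<boxminus> x)"
      define R where "R = \<rho> r"
      have Q: "Q \<in> carrier_mat d d" and R: "R \<in> carrier_mat d d" by (auto simp: Q_def R_def)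
      have QR: "Q * R = 1\<^sub>m d" using r by (simp add: Q_def R_def flip: R_mul) (simp add: R_one)
      have RQ: "R * Q = 1\<^sub>m d" by (rule mat_mult_left_right_inverse[OF Q R QR])
      have stx: "st x = x" using stp by (simp add: x_def A_star_smul)
      have adjQ: "adj Q = Q" unfolding Q_def by (simp flip: R_star add: A_star_mn stx)
      have omx: "o1 \<boxminus> x = o1 \<boxplus> complex_of_real (- (1/\<mu>)) \<cdot>\<^sub>A p"
        by (simp add: A_mn_def x_def flip: A_smul_smul)
      have qfQ: "qf Q w = complex_of_real ((vnorm w)\<^sup>2) - complex_of_real (1/\<mu>) * qf P w"
        if w: "w \<in> carrier_vec d" for w
        unfolding Q_def omx using w by (simp add: R_qf_add R_qf_one R_qf_smul P_def)
      have Qpos: "Re (qf Q w) \<ge> 0" if w: "w \<in> carrier_vec d" for w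
      proof -
        have "Re (qf P w) \<le> \<mu> * (vnorm w)\<^sup>2" by (rule qf_from_unit[OF P le_mu w])
        hence "Re (qf P w) / \<mu> \<le> (vnorm w)\<^sup>2" using mu_pos by (simp add: divide_le_eq mult.commute)
        thus ?thesis using qfQ[OF w] by simp
      qed
      define K where "K = mnorm Q + 1"
      have K: "K > 0" by (simp add: K_def add_nonneg_pos)
      define KR where "KR = mnorm R + 1"
      have KR: "KR > 0" by (simp add: KR_def add_nonneg_pos)
      define \<eta> where "\<eta> = 1 / (KR^2 * K)"
      have eta: "\<eta> > 0" using K KR by (simp add: \<eta>_def)
      have main: "Re (qf Q w) \<ge> \<eta>" if w: "w \<in> carrier_vec d" "vnorm w = 1" for w
      proof -
        define g where "g = Q *\<^sub>v w"
        have g: "g \<in> carrier_vec d" using Q w by (simp add: g_def)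
        define t :: real where "t = 1 / K"
        define w' where "w' = w - complex_of_real t \<cdot>\<^sub>v g"
        have w': "w' \<in> carrier_vec d" using w g by (simp add: w'_def)
        have Qw': "Q *\<^sub>v w' = g - complex_of_real t \<cdot>\<^sub>v (Q *\<^sub>v g)"
          unfolding w'_def g_def using Q w g
          by (simp add: mult_minus_distrib_mat_vec[of _ d d] mult_mat_vec[of _ d d])
        have Qg: "Q *\<^sub>v g \<in> carrier_vec d" using Q g by simp
        have c1: "cinner (Q *\<^sub>v g) w = cinner g g"
        proof -
          have "cinner (adj Q *\<^sub>v g) w = cinner g (Q *\<^sub>v w)" by (rule cinner_adj[OF Q g w(1)])
          thus ?thesis using adjQ by (simp add: g_def)
        qed
        have "qf Q w' = cinner g w - complex_of_real t * cinner g g - complex_of_real t * cinner (Q *\<^sub>v g) w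
                  + complex_of_real t * complex_of_real t * cinner (Q *\<^sub>v g) g"
          unfolding qf_def Qw' using g w Qg
          by (simp add: w'_def cinner_minus_left[of _ d] cinner_minus_right[of _ d] cinner_smult_left
                cinner_smult_right[of _ d] algebra_simps)
        also have "\<dots> = qf Q w - 2 * complex_of_real t * complex_of_real ((vnorm g)\<^sup>2)
                   + complex_of_real t * complex_of_real t * qf Q g"
          using c1 by (simp add: qf_def g_def cinner_self algebra_simps)
        finally have eq: "Re (qf Q w') = Re (qf Q w) - 2 * t * (vnorm g)\<^sup>2 + t * t * Re (qf Q g)"
          by simp
        have "Re (qf Q g) \<le> cmod (qf Q g)" by (rule complex_Re_le_cmod)
        also have "\<dots> \<le> mnorm Q * (vnorm g)\<^sup>2" by (rule qf_bound[OF Q g])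
        also have "\<dots> \<le> K * (vnorm g)\<^sup>2" by (simp add: K_def mult_right_mono)
        finally have "t * t * Re (qf Q g) \<le> t * t * (K * (vnorm g)\<^sup>2)"
          by (simp add: mult_left_mono)
        also have "\<dots> = t * (vnorm g)\<^sup>2" using K by (simp add: t_def)
        finally have "0 \<le> Re (qf Q w) - t * (vnorm g)\<^sup>2" using Qpos[OF w'] eq by linarith
        hence gle: "(vnorm g)\<^sup>2 \<le> K * Re (qf Q w)" using K by (simp add: t_def field_simps)
        have "w = R *\<^sub>v g" using RQ w Q R by (simp add: g_def flip: assoc_mult_mat_vec[of _ d d _ d])
        hence "1 \<le> mnorm R * vnorm g" using vnorm_mat_vec[of g R] g w(2) carrier_matD[OF R] by simp
        also have "\<dots> \<le> KR * vnorm g" by (simp add: KR_def mult_right_mono)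
        finally have "1 \<le> (KR * vnorm g)^2" by (simp add: one_le_power)
        also have "\<dots> = KR^2 * (vnorm g)\<^sup>2" by (simp add: power_mult_distrib)
        also have "\<dots> \<le> KR^2 * (K * Re (qf Q w))" using gle by (simp add: mult_left_mono)
        finally show ?thesis using K KR by (simp add: \<eta>_def field_simps)
      qed
      have "\<forall>s\<in>S. s \<le> \<mu> - \<mu> * \<eta>"
      proof
        fix s assume "s \<in> S"
        then obtain w where w: "w \<in> carrier_vec d" "vnorm w = 1" "s = Re (qf P w)" by (auto simp: S_def)
        have "\<eta> \<le> 1 - Re (qf P w) / \<mu>" using main[OF w(1,2)] qfQ[OF w(1)] w(2) by simp
        hence "\<mu> * \<eta> \<le> \<mu> - Re (qf P w)" using mu_pos by (simp add: field_simps)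
        thus "s \<le> \<mu> - \<mu> * \<eta>" using w(3) by simp
      qed
      hence "\<mu> \<le> \<mu> - \<mu> * \<eta>" unfolding \<mu>_def using Sne by (intro cSup_least) auto
      thus False using mult_pos_pos[OF mu_pos eta] by linarith
    qed
    thus ?thesis using le_mu[OF u] by linarith
  qed
  show ?thesis unfolding p_def[symmetric] P_def[symmetric]
    by (rule qf_from_unit[OF P unit_claim v])
qed

lemma rep_norm_bound:
  assumes v: "v \<in> carrier_vec d"
  shows "vnorm (\<rho> z *\<^sub>v v) \<le> nm z * vnorm v"
proof -
  have "(vnorm (\<rho> z *\<^sub>v v))\<^sup>2 = Re (qf (\<rho> (st z \<boxtimes> z)) v)" using R_qf_pos[OF v] by simp
  also have "\<dots> \<le> nm (st z \<boxtimes> z) * (vnorm v)\<^sup>2" by (rule key_bound[OF v])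
  also have "\<dots> = (nm z * vnorm v)\<^sup>2" by (simp add: A_norm_cstar power_mult_distrib)
  finally show ?thesis by (rule power2_le_imp_le) simp
qed

lemma rep_qf_bound:
  assumes v: "v \<in> carrier_vec d"
  shows "cmod (qf (\<rho> z) v) \<le> nm z * (vnorm v)\<^sup>2"
proof -
  have "cmod (qf (\<rho> z) v) \<le> vnorm (\<rho> z *\<^sub>v v) * vnorm v" unfolding qf_def
    by (rule cinner_CS) (use v in auto)
  also have "\<dots> \<le> nm z * vnorm v * vnorm v"
    by (rule mult_right_mono[OF rep_norm_bound[OF v]]) simp
  finally show ?thesis by (simp add: power2_eq_square mult.assoc)
qed

end


definition posfun :: "'a cstar_alg \<Rightarrow> ('a \<Rightarrow> complex) \<Rightarrow> bool" where
  "posfun A \<phi> \<longleftrightarrow> (\<forall>x y. \<phi> (cadd A x y) = \<phi> x + \<phi> y) \<and> (\<forall>\<alpha> x. \<phi> (csmul A \<alpha> x) = \<alpha> * \<phi> x) \<and>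
     (\<forall>b. cplx_nonneg (\<phi> (cmul A (cstar A b) b)))"

lemma states_posfun: "\<phi> \<in> states A \<Longrightarrow> posfun A \<phi>"
  unfolding states_def posfun_def by blast

lemma cplx_nonneg_sum: "(\<And>i. i \<in> S \<Longrightarrow> cplx_nonneg (f i)) \<Longrightarrow> cplx_nonneg (sum f S)"
  unfolding cplx_nonneg_def by (induction S rule: infinite_finite_induct) (auto simp: sum_nonneg)

context ca
begin

lemma ssum_star: "st (ssum A f m) = ssum A (\<lambda>i. st (f i)) m"
  by (induction m) (simp_all add: A_star_add)

lemma ssum_mul_right: "ssum A f m \<boxtimes> y = ssum A (\<lambda>i. f i \<boxtimes> y) m"
  by (induction m) (simp_all add: A_distR)

lemma ssum_mul_left: "y \<boxtimes> ssum A f m = ssum A (\<lambda>i. y \<boxtimes> f i) m"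
  by (induction m) (simp_all add: A_distL)

lemma posfun_z: "posfun A \<phi> \<Longrightarrow> \<phi> z0 = 0"
proof -
  assume p: "posfun A \<phi>"
  have "\<phi> z0 = \<phi> (0 \<cdot>\<^sub>A z0)" by simp
  also have "\<dots> = 0" using p unfolding posfun_def by (simp del: A_smul_0 A_smul_z)
  finally show ?thesis .
qed

lemma posfun_ssum: "posfun A \<phi> \<Longrightarrow> \<phi> (ssum A f m) = (\<Sum>i<m. \<phi> (f i))"
  by (induction m) (auto simp: posfun_z posfun_def)

lemma posfun_foldr: "posfun A \<phi> \<Longrightarrow> \<phi> (foldr (cadd A) (map f xs) z0) = (\<Sum>x\<leftarrow>xs. \<phi> (f x))"
  by (induction xs) (auto simp: posfun_z posfun_def)

lemma posfun_sesq:
  assumes p: "posfun A \<phi>"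
  shows "\<phi> (st (ssum A (\<lambda>j. w j \<cdot>\<^sub>A b j) m) \<boxtimes> ssum A (\<lambda>j. w j \<cdot>\<^sub>A b j) m)
     = (\<Sum>i<m. \<Sum>j<m. cnj (w i) * \<phi> (st (b i) \<boxtimes> b j) * w j)"
proof -
  have lin: "\<phi> (x \<boxplus> y) = \<phi> x + \<phi> y" "\<phi> (\<alpha> \<cdot>\<^sub>A x) = \<alpha> * \<phi> x" for x y \<alpha>
    using p unfolding posfun_def by auto
  have "\<phi> (st (ssum A (\<lambda>j. w j \<cdot>\<^sub>A b j) m) \<boxtimes> ssum A (\<lambda>j. w j \<cdot>\<^sub>A b j) m)
     = (\<Sum>i<m. \<phi> (st (w i \<cdot>\<^sub>A b i) \<boxtimes> ssum A (\<lambda>j. w j \<cdot>\<^sub>A b j) m))"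
    by (simp add: ssum_star ssum_mul_right posfun_ssum[OF p])
  also have "\<dots> = (\<Sum>i<m. \<Sum>j<m. \<phi> (st (w i \<cdot>\<^sub>A b i) \<boxtimes> (w j \<cdot>\<^sub>A b j)))"
    by (simp add: ssum_mul_left posfun_ssum[OF p])
  also have "\<dots> = (\<Sum>i<m. \<Sum>j<m. cnj (w i) * \<phi> (st (b i) \<boxtimes> b j) * w j)"
    by (simp add: A_star_smul A_mul_smul1 A_mul_smul2 lin mult_ac)
  finally show ?thesis .
qed

lemma posfun_cp:
  assumes p: "posfun A \<phi>"
  shows "state_as_cp \<phi> \<in> cp_maps A 1"
proof -
  have lin: "\<phi> (x \<boxplus> y) = \<phi> x + \<phi> y" "\<phi> (\<alpha> \<cdot>\<^sub>A x) = \<alpha> * \<phi> x" for x y \<alpha>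
    using p unfolding posfun_def by auto
  have pos: "cplx_nonneg (\<phi> (st b \<boxtimes> b))" for b using p unfolding posfun_def by auto
  have "lin_map A (state_as_cp \<phi>)"
    unfolding lin_map_def state_as_cp_def by (auto intro!: eq_matI simp: lin)
  moreover have "\<forall>x. state_as_cp \<phi> x \<in> carrier_mat 1 1" unfolding state_as_cp_def by auto
  moreover have "cplx_nonneg (\<Sum>i<m. \<Sum>j<m. \<Sum>r<1. \<Sum>s<1.
        cnj (w i r) * (state_as_cp \<phi> (foldr (cadd A) (map (\<lambda>l. cmul A (cstar A (b l i)) (b l j)) [0..<m]) (czero A)) $$ (r, s)) * w j s)"
    for m :: nat and b :: "nat \<Rightarrow> nat \<Rightarrow> 'a" and w :: "nat \<Rightarrow> nat \<Rightarrow> complex"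
  proof -
    have "(\<Sum>i<m. \<Sum>j<m. \<Sum>r<1. \<Sum>s<1.
        cnj (w i r) * (state_as_cp \<phi> (foldr (cadd A) (map (\<lambda>l. cmul A (cstar A (b l i)) (b l j)) [0..<m]) (czero A)) $$ (r, s)) * w j s)
      = (\<Sum>i<m. \<Sum>j<m. cnj (w i 0) * (\<Sum>l<m. \<phi> (st (b l i) \<boxtimes> b l j)) * w j 0)"
      by (simp add: state_as_cp_def posfun_foldr[OF p] sum_list_sum_nth atLeast0LessThan lessThan_Suc)
    also have "\<dots> = (\<Sum>i<m. \<Sum>j<m. \<Sum>l<m. cnj (w i 0) * \<phi> (st (b l i) \<boxtimes> b l j) * w j 0)"
      by (simp add: sum_distrib_left sum_distrib_right)
    also have "\<dots> = (\<Sum>i<m. \<Sum>l<m. \<Sum>j<m. cnj (w i 0) * \<phi> (st (b l i) \<boxtimes> b l j) * w j 0)"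
      by (rule sum.cong[OF refl], rule sum.swap)
    also have "\<dots> = (\<Sum>l<m. \<Sum>i<m. \<Sum>j<m. cnj (w i 0) * \<phi> (st (b l i) \<boxtimes> b l j) * w j 0)"
      by (rule sum.swap)
    also have "\<dots> = (\<Sum>l<m. \<phi> (st (ssum A (\<lambda>j. w j 0 \<cdot>\<^sub>A b l j) m) \<boxtimes> ssum A (\<lambda>j. w j 0 \<cdot>\<^sub>A b l j) m))"
      by (simp add: posfun_sesq[OF p])
    finally show ?thesis by (simp add: cplx_nonneg_sum pos)
  qed
  ultimately show ?thesis unfolding cp_maps_def by (simp add: Let_def)
qed

end

context rep
begin

definition tau :: "complex vec \<Rightarrow> 'a \<Rightarrow> complex" where
  "tau v = (\<lambda>x. qf (\<rho> x) v)"

lemma tau_posfun: "v \<in> carrier_vec d \<Longrightarrow> posfun A (tau v)"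
  unfolding posfun_def tau_def cplx_nonneg_def
  by (simp add: R_qf_add R_qf_smul R_qf_pos)

lemma tau_state: "v \<in> carrier_vec d \<Longrightarrow> vnorm v = 1 \<Longrightarrow> tau v \<in> states A"
  using tau_posfun[of v] unfolding states_def posfun_def by (simp add: tau_def R_qf_one)

lemma tau_bound: "v \<in> carrier_vec d \<Longrightarrow> cmod (tau v x) \<le> nm x * (vnorm v)\<^sup>2"
  unfolding tau_def by (rule rep_qf_bound)

lemma type_of_tau: "type_of \<rho> [v] = state_as_cp (tau v)"
  unfolding type_of_def state_as_cp_def tau_def qf_def
  by (rule ext, rule eq_matI) auto

end

lemma basic_nbhd_open:
  assumes "finite F" "e > 0"
  shows "cp_open A 1 (basic_nbhd A 1 \<phi> F e)"
  unfolding cp_open_def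
proof safe
  show "\<psi> \<in> cp_maps A 1" if "\<psi> \<in> basic_nbhd A 1 \<phi> F e" for \<psi> using that by (simp add: basic_nbhd_def)
next
  fix \<psi> assume psi: "\<psi> \<in> basic_nbhd A 1 \<phi> F e"
  define D where "D = (\<lambda>x. cmod (\<psi> x $$ (0,0) - \<phi> x $$ (0,0)))"
  have Dlt: "\<forall>x\<in>F. D x < e" using psi by (simp add: basic_nbhd_def D_def)
  define \<delta> where "\<delta> = Max (insert 0 (D ` F))"
  have fin: "finite (insert 0 (D ` F))" using assms by simp
  have dlt: "\<delta> < e" unfolding \<delta>_def using Dlt assms fin by (subst Max_less_iff) auto
  have dge: "D x \<le> \<delta>" if "x \<in> F" for x unfolding \<delta>_def using fin that by (intro Max_ge) auto
  have "basic_nbhd A 1 \<psi> F (e - \<delta>) \<subseteq> basic_nbhd A 1 \<phi> F e"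
  proof
    fix ch assume chi: "ch \<in> basic_nbhd A 1 \<psi> F (e - \<delta>)"
    have "cmod (ch x $$ (0,0) - \<phi> x $$ (0,0)) < e" if x: "x \<in> F" for x
    proof -
      have "cmod (ch x $$ (0,0) - \<phi> x $$ (0,0)) \<le> cmod (ch x $$ (0,0) - \<psi> x $$ (0,0)) + D x"
        unfolding D_def by (rule order_trans[OF _ norm_triangle_ineq]) simp
      also have "\<dots> < (e - \<delta>) + \<delta>"
      proof -
        have "cmod (ch x $$ (0,0) - \<psi> x $$ (0,0)) < e - \<delta>" using chi x by (simp add: basic_nbhd_def)
        thus ?thesis using dge[OF x] by linarith
      qed
      finally show ?thesis by simp
    qed
    thus "ch \<in> basic_nbhd A 1 \<phi> F e" using chi by (simp add: basic_nbhd_def)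
  qed
  hence sub: "basic_nbhd A 1 \<psi> F (e - \<delta>) \<subseteq> basic_nbhd A 1 \<phi> F e" .
  have sub2: "basic_nbhd A 1 \<phi> F e \<subseteq> cp_maps A 1" by (auto simp: basic_nbhd_def)
  show "cp_nbhd A 1 \<psi> (basic_nbhd A 1 \<phi> F e)" unfolding cp_nbhd_def
    using assms dlt sub sub2 by (intro conjI exI[of _ F] exI[of _ "e - \<delta>"]) auto
qed



definition GQ :: "complex set" where
  "GQ = (\<lambda>(p,q). Complex (real_of_rat p) (real_of_rat q)) ` UNIV"

lemma GQ_countable: "countable GQ"
  unfolding GQ_def by simp

lemma GQ_0: "0 \<in> GQ"
  unfolding GQ_def by (auto intro!: image_eqI[of _ _ "(0,0)"] simp: complex_eq_iff)

lemma GQ_dense: assumes "e > 0" shows "\<exists>g\<in>GQ. cmod (z - g) < e"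
proof -
  obtain p where p: "p \<in> \<rat>" "Re z - e/2 < p" "p < Re z" using Rats_dense_in_real[of "Re z - e/2" "Re z"] assms by auto
  obtain q where q: "q \<in> \<rat>" "Im z - e/2 < q" "q < Im z" using Rats_dense_in_real[of "Im z - e/2" "Im z"] assms by auto
  obtain p' where p': "p = real_of_rat p'" using p(1) Rats_cases by blast
  obtain q' where q': "q = real_of_rat q'" using q(1) Rats_cases by blast
  have g: "Complex p q \<in> GQ" unfolding GQ_def p' q' by (auto intro!: image_eqI[of _ _ "(p',q')"])
  have "cmod (z - Complex p q) \<le> \<bar>Re z - p\<bar> + \<bar>Im z - q\<bar>" using cmod_le[of "z - Complex p q"] by simp
  also have "\<dots> < e" using p q by simp
  finally show ?thesis using g by blast
qed

definition DV :: "nat \<Rightarrow> complex vec set" where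
  "DV n = {v \<in> carrier_vec n. \<forall>i<n. v$i \<in> GQ}"

lemma DV_countable: "countable (DV n)"
proof -
  have "DV n \<subseteq> (\<lambda>xs. vec n (\<lambda>i. xs ! i)) ` lists GQ"
  proof
    fix v assume v: "v \<in> DV n"
    let ?xs = "map (\<lambda>i. v$i) [0..<n]"
    have "?xs \<in> lists GQ" using v by (auto simp: DV_def)
    moreover have "v = vec n (\<lambda>i. ?xs ! i)" using v by (auto simp: DV_def)
    ultimately show "v \<in> (\<lambda>xs. vec n (\<lambda>i. xs ! i)) ` lists GQ" by blast
  qed
  thus ?thesis by (rule countable_subset) (intro countable_image countable_lists GQ_countable)
qed

lemma DV_approx:
  assumes v: "v \<in> carrier_vec n"
  shows "\<exists>s. (\<forall>k. s k \<in> DV n) \<and> (\<forall>i<n. (\<lambda>k. s k $ i) \<longlonglongrightarrow> v $ i)"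
proof -
  have "\<forall>k i. \<exists>g\<in>GQ. cmod (v$i - g) < 1 / Suc k" using GQ_dense by simp
  then obtain g where g: "\<And>k i. g k i \<in> GQ" "\<And>k i. cmod (v$i - g k i) < 1 / Suc k" by metis
  define s where "s k = vec n (g k)" for k
  have "s k \<in> DV n" for k using g by (auto simp: s_def DV_def)
  moreover have "(\<lambda>k. s k $ i) \<longlonglongrightarrow> v $ i" if i: "i < n" for i
  proof (rule LIMSEQ_I)
    fix r :: real assume "r > 0"
    then obtain N where N: "1 / Suc N < r" using reals_Archimedean by (metis inverse_eq_divide)
    have "norm (s k $ i - v $ i) < r" if "k \<ge> N" for k
    proof -
      have "norm (s k $ i - v $ i) = cmod (v$i - g k i)" using i by (simp add: s_def norm_minus_commute)
      also have "\<dots> < 1 / Suc k" by (rule g(2))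
      also have "\<dots> \<le> 1 / Suc N" using that by (simp add: frac_le)
      finally show ?thesis using N by linarith
    qed
    thus "\<exists>no. \<forall>k\<ge>no. norm (s k $ i - v $ i) < r" by blast
  qed
  ultimately show ?thesis by blast
qed

definition mvx :: "nat \<Rightarrow> complex mat \<Rightarrow> complex vec \<Rightarrow> nat \<Rightarrow> complex" where
  "mvx n B v i = (\<Sum>j<n. B$$(i,j) * v$j)"

lemma mv_index_mvx: "B \<in> carrier_mat n n \<Longrightarrow> i < n \<Longrightarrow> v \<in> carrier_vec n \<Longrightarrow> (B *\<^sub>v v) $ i = mvx n B v i"
  unfolding mvx_def by (simp add: mat_vec_index del: index_mult_mat_vec)

lemma qf_mvx: "B \<in> carrier_mat n n \<Longrightarrow> v \<in> carrier_vec n \<Longrightarrow> qf B v = (\<Sum>i<n. mvx n B v i * cnj (v$i))"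
  unfolding qf_def cinner_def by (simp add: mv_index_mvx del: index_mult_mat_vec)

lemma vnorm_formula: "v \<in> carrier_vec n \<Longrightarrow> vnorm v = sqrt (\<Sum>i<n. (cmod (v$i))\<^sup>2)"
  unfolding vnorm_def by simp

lemma vnorm_mv_mvx: "B \<in> carrier_mat n n \<Longrightarrow> v \<in> carrier_vec n \<Longrightarrow>
   vnorm (B *\<^sub>v v) = sqrt (\<Sum>i<n. (cmod (mvx n B v i))\<^sup>2)"
  unfolding vnorm_def by (simp add: mv_index_mvx del: index_mult_mat_vec)

lemma mvx_tendsto: fixes s :: "nat \<Rightarrow> complex vec" and v :: "complex vec"
  shows "(\<forall>i<n. (\<lambda>k. s k $ i) \<longlonglongrightarrow> v $ i) \<Longrightarrow> (\<lambda>k. mvx n B (s k) i) \<longlonglongrightarrow> mvx n B v i"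
  unfolding mvx_def by (auto intro!: tendsto_intros)

lemma qf_tendsto: fixes s :: "nat \<Rightarrow> complex vec" and v :: "complex vec"
  assumes B: "B \<in> carrier_mat n n" and s: "\<And>k. s k \<in> carrier_vec n" and v: "v \<in> carrier_vec n"
    and lim: "\<forall>i<n. (\<lambda>k. s k $ i) \<longlonglongrightarrow> v $ i"
  shows "(\<lambda>k. qf B (s k)) \<longlonglongrightarrow> qf B v"
proof -
  have "(\<lambda>k. \<Sum>i<n. mvx n B (s k) i * cnj (s k $ i)) \<longlonglongrightarrow> (\<Sum>i<n. mvx n B v i * cnj (v$i))"
    using lim by (auto intro!: tendsto_intros mvx_tendsto)
  moreover have "\<And>k. qf B (s k) = (\<Sum>i<n. mvx n B (s k) i * cnj (s k $ i))" using s B qf_mvx by blast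
  ultimately show ?thesis using v B by (simp add: qf_mvx)
qed

lemma vnorm_tendsto: fixes s :: "nat \<Rightarrow> complex vec" and v :: "complex vec"
  assumes s: "\<And>k. s k \<in> carrier_vec n" and v: "v \<in> carrier_vec n"
    and lim: "\<forall>i<n. (\<lambda>k. s k $ i) \<longlonglongrightarrow> v $ i"
  shows "(\<lambda>k. vnorm (s k)) \<longlonglongrightarrow> vnorm v"
proof -
  have "(\<lambda>k. sqrt (\<Sum>i<n. (cmod (s k $ i))\<^sup>2)) \<longlonglongrightarrow> sqrt (\<Sum>i<n. (cmod (v$i))\<^sup>2)"
    using lim by (auto intro!: tendsto_intros)
  moreover have "\<And>k. vnorm (s k) = sqrt (\<Sum>i<n. (cmod (s k $ i))\<^sup>2)" using s vnorm_formula by blast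
  ultimately show ?thesis using v by (simp add: vnorm_formula)
qed

lemma vnorm_mv_tendsto: fixes s :: "nat \<Rightarrow> complex vec" and v :: "complex vec"
  assumes B: "B \<in> carrier_mat n n" and s: "\<And>k. s k \<in> carrier_vec n" and v: "v \<in> carrier_vec n"
    and lim: "\<forall>i<n. (\<lambda>k. s k $ i) \<longlonglongrightarrow> v $ i"
  shows "(\<lambda>k. vnorm (B *\<^sub>v s k)) \<longlonglongrightarrow> vnorm (B *\<^sub>v v)"
proof -
  have "(\<lambda>k. sqrt (\<Sum>i<n. (cmod (mvx n B (s k) i))\<^sup>2)) \<longlonglongrightarrow> sqrt (\<Sum>i<n. (cmod (mvx n B v i))\<^sup>2)"
    using lim by (auto intro!: tendsto_intros mvx_tendsto)
  moreover have "\<And>k. vnorm (B *\<^sub>v s k) = sqrt (\<Sum>i<n. (cmod (mvx n B (s k) i))\<^sup>2)" using s B vnorm_mv_mvx by blast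
  ultimately show ?thesis using v B by (simp add: vnorm_mv_mvx)
qed

lemma opnorm_set_bdd: "B \<in> carrier_mat n n \<Longrightarrow>
   bdd_above {vnorm (B *\<^sub>v v) | v. v \<in> carrier_vec n \<and> vnorm v \<le> 1}"
proof -
  assume B: "B \<in> carrier_mat n n"
  have "vnorm (B *\<^sub>v v) \<le> mnorm B" if "v \<in> carrier_vec n" "vnorm v \<le> 1" for v
  proof -
    have "vnorm (B *\<^sub>v v) \<le> mnorm B * vnorm v" using vnorm_mat_vec[of v B] B that by auto
    also have "\<dots> \<le> mnorm B" using that by (simp add: mult_left_le)
    finally show ?thesis .
  qed
  thus ?thesis using B unfolding bdd_above_def by auto
qed

lemma opnorm_alt: "B \<in> carrier_mat n n \<Longrightarrow> opnorm B = Sup {vnorm (B *\<^sub>v v) | v. v \<in> carrier_vec n \<and> vnorm v \<le> 1}"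
  unfolding opnorm_def by simp

lemma opnorm_ge: "B \<in> carrier_mat n n \<Longrightarrow> v \<in> carrier_vec n \<Longrightarrow> vnorm v \<le> 1 \<Longrightarrow> vnorm (B *\<^sub>v v) \<le> opnorm B"
  unfolding opnorm_alt by (rule cSup_upper) (auto intro: opnorm_set_bdd)

lemma opnorm_le: "B \<in> carrier_mat n n \<Longrightarrow> (\<And>v. v \<in> carrier_vec n \<Longrightarrow> vnorm v \<le> 1 \<Longrightarrow> vnorm (B *\<^sub>v v) \<le> s) \<Longrightarrow> opnorm B \<le> s"
  unfolding opnorm_alt by (rule cSup_least) (auto intro!: exI[of _ "0\<^sub>v n"] simp: vnorm_def)

lemma opnorm_ge_qf:
  assumes B: "B \<in> carrier_mat n n" and u: "u \<in> carrier_vec n" and nz: "vnorm u \<noteq> 0"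
  shows "Re (qf B u) / (vnorm u)\<^sup>2 \<le> opnorm B"
proof -
  define u' where "u' = complex_of_real (1 / vnorm u) \<cdot>\<^sub>v u"
  have u': "u' \<in> carrier_vec n" "vnorm u' = 1" using unit_scale[OF u nz] u by (auto simp: u'_def)
  have "qf B u' = complex_of_real ((1 / vnorm u)^2) * qf B u" unfolding u'_def by (rule qf_scale[OF B u])
  hence "Re (qf B u) / (vnorm u)\<^sup>2 = Re (qf B u')" by (simp add: power_divide)
  also have "\<dots> \<le> cmod (qf B u')" by (rule complex_Re_le_cmod)
  also have "\<dots> \<le> vnorm (B *\<^sub>v u') * vnorm u'" unfolding qf_def by (rule cinner_CS) (use B u' in auto)
  also have "\<dots> \<le> opnorm B" using opnorm_ge[OF B u'(1)] u'(2) by simp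
  finally show ?thesis .
qed

context rep
begin

lemma opnorm_unit_vec:
  assumes op: "opnorm (\<rho> (st b \<boxtimes> b)) \<ge> c" and c: "c > 0" and del: "\<delta> > 0"
  shows "\<exists>v. v \<in> carrier_vec d \<and> vnorm v = 1 \<and> Re (qf (\<rho> (st b \<boxtimes> b)) v) > c - \<delta>"
proof (rule ccontr)
  assume "\<not> ?thesis"
  hence H: "\<And>u. u \<in> carrier_vec d \<Longrightarrow> vnorm u = 1 \<Longrightarrow> Re (qf (\<rho> (st b \<boxtimes> b)) u) \<le> max (c - \<delta>) 0"
    by force
  define s where "s = max (c - \<delta>) 0"
  have s0: "s \<ge> 0" and sc: "s < c" using c del by (auto simp: s_def)
  define C where "C = \<rho> b"
  have C: "C \<in> carrier_mat d d" by (simp add: C_def)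
  have Cb: "(vnorm (C *\<^sub>v v))\<^sup>2 \<le> s * (vnorm v)\<^sup>2" if v: "v \<in> carrier_vec d" for v
    using qf_from_unit[OF R_carrier H[unfolded s_def[symmetric]] v] R_qf_pos[OF v] by (simp add: C_def s_def)
  have Cb': "vnorm (C *\<^sub>v v) \<le> sqrt s * vnorm v" if v: "v \<in> carrier_vec d" for v
    using Cb[OF v] s0 by (metis real_sqrt_le_mono real_sqrt_mult real_sqrt_pow2 power2_eq_square
        real_sqrt_abs abs_of_nonneg vnorm_nonneg)
  have "vnorm (\<rho> (st b \<boxtimes> b) *\<^sub>v v) \<le> s" if v: "v \<in> carrier_vec d" "vnorm v \<le> 1" for v
  proof -
    define w where "w = \<rho> (st b \<boxtimes> b) *\<^sub>v v"
    have w: "w \<in> carrier_vec d" using v by (simp add: w_def)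
    have weq: "w = adj C *\<^sub>v (C *\<^sub>v v)" using v by (simp add: w_def C_def R_mul R_star assoc_mult_mat_vec[of _ d d _ d])
    have "(vnorm w)\<^sup>2 = Re (cinner w w)" by (simp add: cinner_self)
    also have "cinner w w = cinner (C *\<^sub>v v) (C *\<^sub>v w)"
      using cinner_adj[of C d "C *\<^sub>v v" w] C v w weq by simp
    also have "Re \<dots> \<le> cmod \<dots>" by (rule complex_Re_le_cmod)
    also have "\<dots> \<le> vnorm (C *\<^sub>v v) * vnorm (C *\<^sub>v w)" by (rule cinner_CS) (use C v w in auto)
    also have "\<dots> \<le> (sqrt s * vnorm v) * (sqrt s * vnorm w)"
      by (rule mult_mono) (use Cb'[OF v(1)] Cb'[OF w] s0 in auto)
    also have "\<dots> = s * vnorm v * vnorm w" using s0 by (simp add: algebra_simps)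
    also have "\<dots> \<le> s * vnorm w"
    proof -
      have "vnorm v * vnorm w \<le> vnorm w" by (rule mult_left_le_one_le) (use v in auto)
      thus ?thesis using s0 by (simp add: mult.assoc mult_left_mono)
    qed
    finally have "(vnorm w)\<^sup>2 \<le> s * vnorm w" .
    hence sq: "vnorm w * vnorm w \<le> s * vnorm w" by (simp add: power2_eq_square)
    show ?thesis
    proof (cases "vnorm w = 0")
      case False
      hence pos: "vnorm w > 0" using vnorm_nonneg[of w] by linarith
      show ?thesis using mult_right_le_imp_le[OF sq pos] by (simp add: w_def)
    qed (use s0 in \<open>simp add: w_def\<close>)
  qed
  hence "opnorm (\<rho> (st b \<boxtimes> b)) \<le> s" by (intro opnorm_le[OF R_carrier]) auto
  thus False using op sc by linarith
qed

end


section \<open>Measurability\<close>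

context ca
begin

lemma cell_measurable:
  fixes M :: "'w measure" and T :: "'w \<Rightarrow> 'a \<Rightarrow> complex" and V :: real and D :: "'a set"
  assumes pos: "\<And>\<omega>. \<omega> \<in> space M \<Longrightarrow> posfun A (T \<omega>)"
    and lip: "\<And>\<omega> x y. \<omega> \<in> space M \<Longrightarrow> cmod (T \<omega> x - T \<omega> y) \<le> nm (x \<boxminus> y) * V"
    and V: "V \<ge> 0"
    and meas: "\<And>x. (\<lambda>\<omega>. T \<omega> x) \<in> borel_measurable M"
    and Dc: "countable D" and Dd: "\<And>x e. e > 0 \<Longrightarrow> \<exists>y\<in>D. nm (x \<boxminus> y) < e"
    and U: "cp_open A 1 U"
  shows "{\<omega> \<in> space M. state_as_cp (T \<omega>) \<in> U} \<in> sets M"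
proof -
  define W where "W = {\<omega> \<in> space M. state_as_cp (T \<omega>) \<in> U}"
  define cell where "cell = (\<lambda>(L :: ('a \<times> complex) list, r :: rat).
      {\<omega> \<in> space M. \<forall>p\<in>set L. cmod (T \<omega> (fst p) - snd p) < real_of_rat r})"
  define I where "I = lists (D \<times> GQ) \<times> (UNIV :: rat set)"
  have Ic: "countable I" unfolding I_def
    by (intro countable_SIGMA countable_lists countableI_type Dc GQ_countable)
  have cell_meas: "cell p \<in> sets M" for p
  proof -
    obtain L r where p: "p = (L, r)" by (cases p)
    have "{\<omega> \<in> space M. \<forall>q\<in>set L. cmod (T \<omega> (fst q) - snd q) < real_of_rat r} \<in> sets M"
    proof (rule sets.sets_Collect_finite_All)
      fix q assume "q \<in> set L"
      show "{\<omega> \<in> space M. cmod (T \<omega> (fst q) - snd q) < real_of_rat r} \<in> sets M"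
        using meas[of "fst q"] by measurable
    qed simp
    thus ?thesis by (simp add: cell_def p)
  qed
  have "W = (\<Union>p\<in>{p\<in>I. cell p \<subseteq> W}. cell p)"
  proof
    show "(\<Union>p\<in>{p\<in>I. cell p \<subseteq> W}. cell p) \<subseteq> W" by blast
  next
    show "W \<subseteq> (\<Union>p\<in>{p\<in>I. cell p \<subseteq> W}. cell p)"
    proof
      fix \<omega>0 assume w0: "\<omega>0 \<in> W"
      hence w0s: "\<omega>0 \<in> space M" and inU: "state_as_cp (T \<omega>0) \<in> U" by (auto simp: W_def)
      from U inU have "cp_nbhd A 1 (state_as_cp (T \<omega>0)) U" unfolding cp_open_def by blast
      then obtain F e where F: "finite F" and e: "e > 0" and sub: "basic_nbhd A 1 (state_as_cp (T \<omega>0)) F e \<subseteq> U"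
        unfolding cp_nbhd_def by blast
      obtain r0 where r0: "r0 \<in> \<rat>" "0 < r0" "r0 < e / 4" using Rats_dense_in_real[of 0 "e/4"] e by auto
      obtain r where r: "r0 = real_of_rat r" using r0(1) Rats_cases by blast
      have "\<forall>x. \<exists>y\<in>D. nm (x \<boxminus> y) < r0 / (V + 1)" using Dd r0 V by simp
      then obtain yy where yy: "\<And>x. yy x \<in> D" "\<And>x. nm (x \<boxminus> yy x) < r0 / (V + 1)" by metis
      have "\<forall>x. \<exists>g\<in>GQ. cmod (T \<omega>0 (yy x) - g) < r0" using GQ_dense r0 by simp
      then obtain qq where qq: "\<And>x. qq x \<in> GQ" "\<And>x. cmod (T \<omega>0 (yy x) - qq x) < r0" by metis
      obtain xs where xs: "set xs = F" using finite_list[OF F] by blast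
      define L where "L = map (\<lambda>x. (yy x, qq x)) xs"
      have LI: "(L, r) \<in> I" using yy qq by (auto simp: I_def L_def)
      have ybound: "cmod (T \<omega> x - T \<omega> (yy x)) \<le> r0" if "\<omega> \<in> space M" for \<omega> x
      proof -
        have "cmod (T \<omega> x - T \<omega> (yy x)) \<le> nm (x \<boxminus> yy x) * V" by (rule lip[OF that])
        also have "\<dots> \<le> r0 / (V + 1) * V" using yy(2)[of x] V by (intro mult_right_mono) auto
        also have "\<dots> \<le> r0" using r0 V by (simp add: field_simps)
        finally show ?thesis .
      qed
      have in_cell: "\<omega>0 \<in> cell (L, r)" using w0s qq(2) r by (auto simp: cell_def L_def)
      have cell_sub: "cell (L, r) \<subseteq> W"
      proof
        fix \<omega> assume w: "\<omega> \<in> cell (L, r)"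
        hence ws: "\<omega> \<in> space M" and cl: "\<And>x. x \<in> F \<Longrightarrow> cmod (T \<omega> (yy x) - qq x) < r0"
          using xs r by (auto simp: cell_def L_def)
        have close: "cmod (T \<omega> x - T \<omega>0 x) < e" if x: "x \<in> F" for x
        proof -
          have "T \<omega> x - T \<omega>0 x = (T \<omega> x - T \<omega> (yy x)) + (T \<omega> (yy x) - qq x)
                 + (qq x - T \<omega>0 (yy x)) + (T \<omega>0 (yy x) - T \<omega>0 x)" (is "_ = ?R") by simp
          hence eqR: "cmod (T \<omega> x - T \<omega>0 x) = cmod ?R" by simp
          have "cmod (T \<omega> x - T \<omega>0 x) \<le> cmod (T \<omega> x - T \<omega> (yy x)) + cmod (T \<omega> (yy x) - qq x)
                 + cmod (qq x - T \<omega>0 (yy x)) + cmod (T \<omega>0 (yy x) - T \<omega>0 x)"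
            using norm_triangle_ineq[of "(T \<omega> x - T \<omega> (yy x)) + (T \<omega> (yy x) - qq x) + (qq x - T \<omega>0 (yy x))" "T \<omega>0 (yy x) - T \<omega>0 x"]
               norm_triangle_ineq[of "(T \<omega> x - T \<omega> (yy x)) + (T \<omega> (yy x) - qq x)" "qq x - T \<omega>0 (yy x)"]
               norm_triangle_ineq[of "T \<omega> x - T \<omega> (yy x)" "T \<omega> (yy x) - qq x"] eqR by linarith
          also have "\<dots> < r0 + r0 + r0 + r0"
            using ybound[OF ws, of x] cl[OF x] qq(2)[of x] ybound[OF w0s, of x]
              norm_minus_commute[of "qq x" "T \<omega>0 (yy x)"] norm_minus_commute[of "T \<omega>0 (yy x)" "T \<omega>0 x"]
            by linarith
          finally show ?thesis using r0 by linarith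
        qed
        have "state_as_cp (T \<omega>) \<in> basic_nbhd A 1 (state_as_cp (T \<omega>0)) F e"
          using posfun_cp[OF pos[OF ws]] close by (simp add: basic_nbhd_def state_as_cp_def)
        thus "\<omega> \<in> W" using sub ws by (auto simp: W_def)
      qed
      show "\<omega>0 \<in> (\<Union>p\<in>{p\<in>I. cell p \<subseteq> W}. cell p)" using LI cell_sub in_cell by blast
    qed
  qed
  also have "\<dots> \<in> sets M"
  proof (rule sets.countable_UN')
    show "countable {p\<in>I. cell p \<subseteq> W}" by (rule countable_subset[OF _ Ic]) blast
    show "cell ` {p\<in>I. cell p \<subseteq> W} \<subseteq> sets M" using cell_meas by blast
  qed
  finally show ?thesis unfolding W_def .
qed

end

locale rseq = ca +
  fixes M :: "'w measure" and d :: "nat \<Rightarrow> nat" and \<pi> :: "nat \<Rightarrow> 'w \<Rightarrow> 'a \<Rightarrow> complex mat"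
  assumes rAP: "random_AP_seq A M d \<pi>"
begin

lemma prob: "prob_space M" using rAP unfolding random_AP_seq_def by blast
lemma d_lim: "filterlim d at_top sequentially" using rAP unfolding random_AP_seq_def by blast
lemma is_rep: "\<omega> \<in> space M \<Longrightarrow> rep A (d n) (\<pi> n \<omega>)"
  using rAP ax unfolding random_AP_seq_def rep_def rep_axioms_def ca_def by blast
lemma entry_meas[measurable]: "(\<lambda>\<omega>. \<pi> n \<omega> x $$ (i,j)) \<in> borel_measurable M"
  using rAP unfolding random_AP_seq_def by blast

lemma carrier_pi: "\<omega> \<in> space M \<Longrightarrow> \<pi> n \<omega> x \<in> carrier_mat (d n) (d n)"
  by (rule rep.R_carrier[OF is_rep])

lemma qf_meas: "v \<in> carrier_vec (d n) \<Longrightarrow> (\<lambda>\<omega>. qf (\<pi> n \<omega> x) v) \<in> borel_measurable M"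
proof -
  assume v: "v \<in> carrier_vec (d n)"
  have "(\<lambda>\<omega>. \<Sum>i<d n. (\<Sum>j<d n. \<pi> n \<omega> x $$ (i,j) * v$j) * cnj (v$i)) \<in> borel_measurable M"
    by (intro borel_measurable_sum borel_measurable_times borel_measurable_const entry_meas)
  moreover have eq: "\<omega> \<in> space M \<Longrightarrow> qf (\<pi> n \<omega> x) v = (\<Sum>i<d n. (\<Sum>j<d n. \<pi> n \<omega> x $$ (i,j) * v$j) * cnj (v$i))" for \<omega>
    using qf_mvx[OF carrier_pi v] by (simp add: mvx_def)
  ultimately show ?thesis by (simp add: measurable_cong[OF eq])
qed

lemma vnorm_meas: "v \<in> carrier_vec (d n) \<Longrightarrow> (\<lambda>\<omega>. vnorm (\<pi> n \<omega> x *\<^sub>v v)) \<in> borel_measurable M"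
proof -
  assume v: "v \<in> carrier_vec (d n)"
  have "(\<lambda>\<omega>. (\<Sum>j<d n. \<pi> n \<omega> x $$ (i,j) * v$j)) \<in> borel_measurable M" for i
    by (intro borel_measurable_sum borel_measurable_times borel_measurable_const entry_meas)
  hence "(\<lambda>\<omega>. sqrt (\<Sum>i<d n. (cmod (\<Sum>j<d n. \<pi> n \<omega> x $$ (i,j) * v$j))\<^sup>2)) \<in> borel_measurable M"
    by measurable
  moreover have eq: "\<omega> \<in> space M \<Longrightarrow> vnorm (\<pi> n \<omega> x *\<^sub>v v) = sqrt (\<Sum>i<d n. (cmod (\<Sum>j<d n. \<pi> n \<omega> x $$ (i,j) * v$j))\<^sup>2)" for \<omega>
    using vnorm_mv_mvx[OF carrier_pi v] by (simp add: mvx_def)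
  ultimately show ?thesis by (simp add: measurable_cong[OF eq])
qed

end


context rep
begin

lemma tau_eq: "tau v = (\<lambda>x. qf (\<rho> x) v)" by (simp add: tau_def)

lemma qf_mn: "v \<in> carrier_vec d \<Longrightarrow> qf (\<rho> (x \<boxminus> y)) v = qf (\<rho> x) v - qf (\<rho> y) v"
  by (simp add: A_mn_def R_qf_add R_qf_smul)

lemma qf_lip: "v \<in> carrier_vec d \<Longrightarrow> cmod (qf (\<rho> x) v - qf (\<rho> y) v) \<le> nm (x \<boxminus> y) * (vnorm v)\<^sup>2"
  using rep_qf_bound[of v "x \<boxminus> y"] by (simp add: qf_mn)

lemma dense_witness:
  assumes U: "cp_open A 1 U" and v: "v \<in> carrier_vec d" and inU: "state_as_cp (\<lambda>x. qf (\<rho> x) v) \<in> U"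
  shows "\<exists>v'\<in>DV d. state_as_cp (\<lambda>x. qf (\<rho> x) v') \<in> U"
proof -
  from U inU have "cp_nbhd A 1 (state_as_cp (\<lambda>x. qf (\<rho> x) v)) U" unfolding cp_open_def by blast
  then obtain F e where F: "finite F" and e: "e > 0"
    and sub: "basic_nbhd A 1 (state_as_cp (\<lambda>x. qf (\<rho> x) v)) F e \<subseteq> U"
    unfolding cp_nbhd_def by blast
  obtain s where s: "\<And>k. s k \<in> DV d" and lim: "\<forall>i<d. (\<lambda>k. s k $ i) \<longlonglongrightarrow> v $ i"
    using DV_approx[OF v] by blast
  have sc: "s k \<in> carrier_vec d" for k using s by (simp add: DV_def)
  have "\<forall>\<^sub>F k in sequentially. \<forall>x\<in>F. cmod (qf (\<rho> x) (s k) - qf (\<rho> x) v) < e"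
  proof (rule eventually_ball_finite[OF F], rule ballI)
    fix x assume "x \<in> F"
    have "(\<lambda>k. qf (\<rho> x) (s k)) \<longlonglongrightarrow> qf (\<rho> x) v" by (rule qf_tendsto[OF R_carrier sc v lim])
    hence "(\<lambda>k. qf (\<rho> x) (s k) - qf (\<rho> x) v) \<longlonglongrightarrow> 0" by (rule LIM_zero)
    hence "(\<lambda>k. cmod (qf (\<rho> x) (s k) - qf (\<rho> x) v)) \<longlonglongrightarrow> 0" by (rule tendsto_norm_zero)
    thus "\<forall>\<^sub>F k in sequentially. cmod (qf (\<rho> x) (s k) - qf (\<rho> x) v) < e" using e by (rule order_tendstoD(2))
  qed
  then obtain k where k: "\<forall>x\<in>F. cmod (qf (\<rho> x) (s k) - qf (\<rho> x) v) < e"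
    using eventually_sequentially by auto
  have "state_as_cp (\<lambda>x. qf (\<rho> x) (s k)) \<in> basic_nbhd A 1 (state_as_cp (\<lambda>x. qf (\<rho> x) v)) F e"
    using posfun_cp[OF tau_posfun[OF sc[of k]]] k by (simp add: basic_nbhd_def state_as_cp_def tau_def)
  thus ?thesis using sub s by blast
qed

lemma Xset_ne_iff:
  "Xset d 1 \<rho> U \<noteq> {} \<longleftrightarrow> (\<exists>v\<in>carrier_vec d. state_as_cp (\<lambda>x. qf (\<rho> x) v) \<in> U)"
proof
  assume "Xset d 1 \<rho> U \<noteq> {}"
  then obtain vs where vs: "length vs = 1" "\<forall>v\<in>set vs. v \<in> carrier_vec d" "type_of \<rho> vs \<in> U"
    unfolding Xset_def by blast
  then obtain v where "vs = [v]" by (metis One_nat_def length_0_conv length_Suc_conv)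
  thus "\<exists>v\<in>carrier_vec d. state_as_cp (\<lambda>x. qf (\<rho> x) v) \<in> U" using vs by (auto simp: type_of_tau tau_def)
next
  assume "\<exists>v\<in>carrier_vec d. state_as_cp (\<lambda>x. qf (\<rho> x) v) \<in> U"
  then obtain v where v: "v \<in> carrier_vec d" "state_as_cp (\<lambda>x. qf (\<rho> x) v) \<in> U" by blast
  hence "[v] \<in> Xset d 1 \<rho> U" by (simp add: Xset_def type_of_tau tau_def)
  thus "Xset d 1 \<rho> U \<noteq> {}" by blast
qed

end

lemma opnorm_char:
  fixes B :: "complex mat"
  assumes B: "B \<in> carrier_mat n n"
  shows "c \<le> opnorm B \<longleftrightarrow> (\<forall>k::nat. \<exists>v\<in>DV n. vnorm v < 1 + inverse (real (Suc k)) \<and>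
            c - inverse (real (Suc k)) < vnorm (B *\<^sub>v v))"
proof
  assume c: "c \<le> opnorm B"
  show "\<forall>k::nat. \<exists>v\<in>DV n. vnorm v < 1 + inverse (real (Suc k)) \<and> c - inverse (real (Suc k)) < vnorm (B *\<^sub>v v)"
  proof
    fix k :: nat
    define \<delta> where "\<delta> = inverse (real (Suc k))"
    have del: "\<delta> > 0" by (simp add: \<delta>_def)
    define S where "S = {vnorm (B *\<^sub>v v) | v. v \<in> carrier_vec n \<and> vnorm v \<le> 1}"
    have Sne: "S \<noteq> {}" unfolding S_def by (auto intro!: exI[of _ "0\<^sub>v n"] simp: vnorm_def)
    have "c - \<delta> < Sup S" using c del opnorm_alt[OF B] by (simp add: S_def)
    then obtain u where u: "u \<in> carrier_vec n" "vnorm u \<le> 1" "c - \<delta> < vnorm (B *\<^sub>v u)"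
      using less_cSup_iff[OF Sne opnorm_set_bdd[OF B, folded S_def]] unfolding S_def by blast
    obtain s where s: "\<And>k. s k \<in> DV n" and lim: "\<forall>i<n. (\<lambda>k. s k $ i) \<longlonglongrightarrow> u $ i"
      using DV_approx[OF u(1)] by blast
    have sc: "s k \<in> carrier_vec n" for k using s by (simp add: DV_def)
    have e1: "\<forall>\<^sub>F j in sequentially. vnorm (s j) < 1 + \<delta>"
      by (rule order_tendstoD(2)[OF vnorm_tendsto[OF sc u(1) lim]]) (use u(2) del in simp)
    have e2: "\<forall>\<^sub>F j in sequentially. c - \<delta> < vnorm (B *\<^sub>v s j)"
      by (rule order_tendstoD(1)[OF vnorm_mv_tendsto[OF B sc u(1) lim]]) (use u(3) in simp)
    obtain j where "vnorm (s j) < 1 + \<delta>" "c - \<delta> < vnorm (B *\<^sub>v s j)"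
      using eventually_conj[OF e1 e2] eventually_sequentially by auto
    thus "\<exists>v\<in>DV n. vnorm v < 1 + inverse (real (Suc k)) \<and> c - inverse (real (Suc k)) < vnorm (B *\<^sub>v v)"
      using s unfolding \<delta>_def by blast
  qed
next
  assume H: "\<forall>k::nat. \<exists>v\<in>DV n. vnorm v < 1 + inverse (real (Suc k)) \<and> c - inverse (real (Suc k)) < vnorm (B *\<^sub>v v)"
  have z: "vnorm (0\<^sub>v n :: complex vec) \<le> 1" by (simp add: vnorm_def)
  have op0: "0 \<le> opnorm B" using order_trans[OF vnorm_nonneg opnorm_ge[OF B _ z]] by simp
  have bound: "(c - inverse (real (Suc k))) / (1 + inverse (real (Suc k))) \<le> opnorm B" for k
  proof -
    define \<delta> where "\<delta> = inverse (real (Suc k))"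
    have del: "\<delta> > 0" by (simp add: \<delta>_def)
    obtain v where v: "v \<in> DV n" "vnorm v < 1 + \<delta>" "c - \<delta> < vnorm (B *\<^sub>v v)" using H \<delta>_def by blast
    have vc: "v \<in> carrier_vec n" using v by (simp add: DV_def)
    define t where "t = max 1 (vnorm v)"
    have t: "t \<ge> 1" "t < 1 + \<delta>" "vnorm v \<le> t" using v del by (auto simp: t_def)
    define u where "u = complex_of_real (1 / t) \<cdot>\<^sub>v v"
    have uc: "u \<in> carrier_vec n" using vc by (simp add: u_def)
    have un: "vnorm u \<le> 1" using t by (simp add: u_def vnorm_smult norm_divide divide_le_eq)
    have "vnorm (B *\<^sub>v u) = vnorm (B *\<^sub>v v) / t"
      using t B vc by (simp add: u_def mult_mat_vec[of _ n n] vnorm_smult norm_divide)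
    hence "vnorm (B *\<^sub>v v) / t \<le> opnorm B" using opnorm_ge[OF B uc un] by simp
    show ?thesis
    proof (cases "c - \<delta> \<ge> 0")
      case True
      have "(c - \<delta>) / (1 + \<delta>) \<le> (c - \<delta>) / t" using True t del by (intro divide_left_mono) auto
      also have "\<dots> \<le> vnorm (B *\<^sub>v v) / t" using v(3) t by (intro divide_right_mono) auto
      also have "\<dots> \<le> opnorm B" by fact
      finally show ?thesis unfolding \<delta>_def .
    next
      case False
      hence "(c - \<delta>) / (1 + \<delta>) \<le> 0" using del by (simp add: divide_nonpos_pos)
      thus ?thesis using op0 unfolding \<delta>_def by linarith
    qed
  qed
  have "(\<lambda>k. (c - inverse (real (Suc k))) / (1 + inverse (real (Suc k)))) \<longlonglongrightarrow> (c - 0) / (1 + 0)"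
    by (intro tendsto_intros LIMSEQ_inverse_real_of_nat) simp
  hence "(\<lambda>k. (c - inverse (real (Suc k))) / (1 + inverse (real (Suc k)))) \<longlonglongrightarrow> c" by simp
  thus "c \<le> opnorm B" by (rule LIMSEQ_le_const2) (use bound in auto)
qed

context rseq
begin

lemma X_meas:
  assumes sep: "cstar_separable A" and U: "cp_open A 1 U"
  shows "{\<omega> \<in> space M. Xset (d n) 1 (\<pi> n \<omega>) U \<noteq> {}} \<in> sets M"
proof -
  obtain D where Dc: "countable D" and Dd: "\<And>x e. e > 0 \<Longrightarrow> \<exists>y\<in>D. nm (x \<boxminus> y) < e"
    using sep unfolding cstar_separable_def by blast
  have "{\<omega> \<in> space M. Xset (d n) 1 (\<pi> n \<omega>) U \<noteq> {}}
      = (\<Union>v\<in>DV (d n). {\<omega> \<in> space M. state_as_cp (\<lambda>x. qf (\<pi> n \<omega> x) v) \<in> U})"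
  proof (intro equalityI subsetI)
    fix \<omega> assume "\<omega> \<in> {\<omega> \<in> space M. Xset (d n) 1 (\<pi> n \<omega>) U \<noteq> {}}"
    hence w: "\<omega> \<in> space M" "Xset (d n) 1 (\<pi> n \<omega>) U \<noteq> {}" by auto
    interpret r: rep A "d n" "\<pi> n \<omega>" by (rule is_rep[OF w(1)])
    obtain v where "v \<in> carrier_vec (d n)" "state_as_cp (\<lambda>x. qf (\<pi> n \<omega> x) v) \<in> U"
      using w(2) r.Xset_ne_iff by blast
    then obtain v' where "v' \<in> DV (d n)" "state_as_cp (\<lambda>x. qf (\<pi> n \<omega> x) v') \<in> U"
      using r.dense_witness[OF U] by blast
    thus "\<omega> \<in> (\<Union>v\<in>DV (d n). {\<omega> \<in> space M. state_as_cp (\<lambda>x. qf (\<pi> n \<omega> x) v) \<in> U})"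
      using w(1) by blast
  next
    fix \<omega> assume "\<omega> \<in> (\<Union>v\<in>DV (d n). {\<omega> \<in> space M. state_as_cp (\<lambda>x. qf (\<pi> n \<omega> x) v) \<in> U})"
    then obtain v where w: "\<omega> \<in> space M" "v \<in> DV (d n)" "state_as_cp (\<lambda>x. qf (\<pi> n \<omega> x) v) \<in> U" by blast
    interpret r: rep A "d n" "\<pi> n \<omega>" by (rule is_rep[OF w(1)])
    have "v \<in> carrier_vec (d n)" using w(2) by (simp add: DV_def)
    hence "Xset (d n) 1 (\<pi> n \<omega>) U \<noteq> {}" using w(3) r.Xset_ne_iff by blast
    thus "\<omega> \<in> {\<omega> \<in> space M. Xset (d n) 1 (\<pi> n \<omega>) U \<noteq> {}}" using w(1) by blast
  qed
  also have "\<dots> \<in> sets M"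
  proof (rule sets.countable_UN'')
    show "countable (DV (d n))" by (rule DV_countable)
    fix v assume v: "v \<in> DV (d n)"
    hence vc: "v \<in> carrier_vec (d n)" by (simp add: DV_def)
    show "{\<omega> \<in> space M. state_as_cp (\<lambda>x. qf (\<pi> n \<omega> x) v) \<in> U} \<in> sets M"
    proof (rule cell_measurable[where V = "(vnorm v)\<^sup>2", OF _ _ _ _ Dc Dd U])
      fix \<omega> assume w: "\<omega> \<in> space M"
      interpret r: rep A "d n" "\<pi> n \<omega>" by (rule is_rep[OF w])
      show "posfun A (\<lambda>x. qf (\<pi> n \<omega> x) v)" using r.tau_posfun[OF vc] by (simp add: r.tau_def)
      show "cmod (qf (\<pi> n \<omega> x) v - qf (\<pi> n \<omega> y) v) \<le> nm (x \<boxminus> y) * (vnorm v)\<^sup>2" for x y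
        by (rule r.qf_lip[OF vc])
    next
      show "(vnorm v)\<^sup>2 \<ge> 0" by simp
      show "(\<lambda>\<omega>. qf (\<pi> n \<omega> x) v) \<in> borel_measurable M" for x by (rule qf_meas[OF vc])
    qed
  qed
  finally show ?thesis .
qed

lemma E_meas:
  "{\<omega> \<in> space M. c \<le> opnorm (\<pi> n \<omega> a)} \<in> sets M"
proof -
  define S where "S k v = {\<omega> \<in> space M. vnorm v < 1 + inverse (real (Suc k)) \<and>
      c - inverse (real (Suc k)) < vnorm (\<pi> n \<omega> a *\<^sub>v v)}" for k v
  have "{\<omega> \<in> space M. c \<le> opnorm (\<pi> n \<omega> a)} = (\<Inter>k\<in>UNIV. \<Union>v\<in>DV (d n). S k v)"
  proof safe
    fix \<omega> k assume w: "\<omega> \<in> space M" "c \<le> opnorm (\<pi> n \<omega> a)"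
    thus "\<omega> \<in> (\<Union>v\<in>DV (d n). S k v)" using opnorm_char[OF carrier_pi[OF w(1)]] by (auto simp: S_def)
  next
    fix \<omega> assume w: "\<omega> \<in> (\<Inter>k\<in>UNIV. \<Union>v\<in>DV (d n). S k v)"
    thus ws: "\<omega> \<in> space M" by (auto simp: S_def)
    show "c \<le> opnorm (\<pi> n \<omega> a)" using w opnorm_char[OF carrier_pi[OF ws]] by (auto simp: S_def)
  qed
  also have "\<dots> \<in> sets M"
  proof (rule sets.countable_INT')
    show "range (\<lambda>k. \<Union>v\<in>DV (d n). S k v) \<subseteq> sets M"
    proof safe
      fix k
      have "S k v \<in> sets M" if v: "v \<in> DV (d n)" for v
      proof (cases "vnorm v < 1 + inverse (real (Suc k))")
        case True
        have vc: "v \<in> carrier_vec (d n)" using v by (simp add: DV_def)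
        have "S k v = {\<omega> \<in> space M. c - inverse (real (Suc k)) < vnorm (\<pi> n \<omega> a *\<^sub>v v)}"
          using True by (auto simp: S_def)
        also have "\<dots> \<in> sets M" by (rule borel_measurable_less[OF borel_measurable_const vnorm_meas[OF vc]])
        finally show ?thesis .
      next
        case False thus ?thesis by (simp add: S_def)
      qed
      thus "(\<Union>v\<in>DV (d n). S k v) \<in> sets M" by (intro sets.countable_UN'' DV_countable)
    qed
  qed auto
  finally show ?thesis .
qed

end


section \<open>Lower bound\<close>

lemma elog_mono: "p \<le> q \<Longrightarrow> elog p \<le> elog q"
  unfolding elog_def by auto

lemma rate_mono: "p \<le> q \<Longrightarrow> ereal (1 / real k) * elog p \<le> ereal (1 / real k) * elog q"
  by (rule ereal_mult_left_mono[OF elog_mono]) auto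

context rseq
begin

lemma lower_piece:
  assumes LD: "LD_convergent A M d \<pi>" and pos: "cpositive A a" and c: "c > 0"
    and c': "c' > c" and phi: "\<phi> \<in> states A" "Re (\<phi> a) \<ge> c'"
  shows "h0 A M d \<pi> 1 (state_as_cp \<phi>) \<le>
     liminf (\<lambda>n. ereal (1 / real (d n)) * elog (measure M {\<omega> \<in> space M. c \<le> opnorm (\<pi> n \<omega> a)}))"
proof -
  obtain b where b: "a = st b \<boxtimes> b" using pos unfolding cpositive_def by blast
  define \<delta> where "\<delta> = min ((c' - c) / (1 + c)) (1/2)"
  have q0: "(c' - c) / (1 + c) > 0" using c c' by simp
  have del1: "\<delta> > 0" "\<delta> \<le> 1/2" "\<delta> \<le> (c' - c) / (1 + c)" using q0 unfolding \<delta>_def by (auto simp: min_def)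
  have "\<delta> * (1 + c) \<le> (c' - c) / (1 + c) * (1 + c)" using del1(3) c by (intro mult_right_mono) auto
  also have "\<dots> = c' - c" using c by simp
  finally have del: "\<delta> > 0" "\<delta> \<le> 1/2" "\<delta> * (1 + c) \<le> c' - c" using del1 by auto
  define U where "U = basic_nbhd A 1 (state_as_cp \<phi>) {o1, a} \<delta>"
  have Uo: "cp_open A 1 U" unfolding U_def by (rule basic_nbhd_open) (use del in auto)
  have phicp: "state_as_cp \<phi> \<in> cp_maps A 1" by (rule posfun_cp[OF states_posfun[OF phi(1)]])
  have phiU: "state_as_cp \<phi> \<in> U" using phicp del by (simp add: U_def basic_nbhd_def)
  have "liminf (rate M d \<pi> 1 U) \<ge> h0 A M d \<pi> 1 (state_as_cp \<phi>)"
    using LD phicp Uo phiU unfolding LD_convergent_def by blast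
  moreover have "rate M d \<pi> 1 U n \<le>
       ereal (1 / real (d n)) * elog (measure M {\<omega> \<in> space M. c \<le> opnorm (\<pi> n \<omega> a)})" for n
  proof -
    have sub: "{\<omega> \<in> space M. Xset (d n) 1 (\<pi> n \<omega>) U \<noteq> {}} \<subseteq> {\<omega> \<in> space M. c \<le> opnorm (\<pi> n \<omega> a)}"
    proof
      fix \<omega> assume "\<omega> \<in> {\<omega> \<in> space M. Xset (d n) 1 (\<pi> n \<omega>) U \<noteq> {}}"
      hence w: "\<omega> \<in> space M" and X: "Xset (d n) 1 (\<pi> n \<omega>) U \<noteq> {}" by auto
      interpret r: rep A "d n" "\<pi> n \<omega>" by (rule is_rep[OF w])
      obtain v where v: "v \<in> carrier_vec (d n)" "state_as_cp (\<lambda>x. qf (\<pi> n \<omega> x) v) \<in> U"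
        using X r.Xset_ne_iff by blast
      have near: "cmod (qf (\<pi> n \<omega> x) v - \<phi> x) < \<delta>" if "x \<in> {o1, a}" for x
        using v(2) that unfolding U_def basic_nbhd_def state_as_cp_def by auto
      have phi1: "\<phi> o1 = 1" using phi(1) unfolding states_def by blast
      have "cmod (complex_of_real ((vnorm v)\<^sup>2) - 1) < \<delta>" using near[of o1] r.R_qf_one[OF v(1)] phi1 by simp
      hence vn: "\<bar>(vnorm v)\<^sup>2 - 1\<bar> < \<delta>" by (metis norm_of_real of_real_1 of_real_diff)
      have "Re (qf (\<pi> n \<omega> a) v) - Re (\<phi> a) \<ge> - \<delta>"
        using near[of a] abs_Re_le_cmod[of "qf (\<pi> n \<omega> a) v - \<phi> a"] by simp
      hence qa: "Re (qf (\<pi> n \<omega> a) v) \<ge> c' - \<delta>" using phi(2) by linarith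
      have vpos: "(vnorm v)\<^sup>2 > 0" using vn del by linarith
      hence vnz: "vnorm v \<noteq> 0" by auto
      have "c * (vnorm v)\<^sup>2 < c * (1 + \<delta>)" using vn c by (intro mult_strict_left_mono) auto
      also have "\<dots> \<le> c' - \<delta>" using del by (simp add: algebra_simps)
      also have "\<dots> \<le> Re (qf (\<pi> n \<omega> a) v)" by (rule qa)
      finally have "c \<le> Re (qf (\<pi> n \<omega> a) v) / (vnorm v)\<^sup>2" using vpos by (simp add: le_divide_eq)
      also have "\<dots> \<le> opnorm (\<pi> n \<omega> a)" by (rule opnorm_ge_qf[OF r.R_carrier v(1) vnz])
      finally have "c \<le> opnorm (\<pi> n \<omega> a)" .
      thus "\<omega> \<in> {\<omega> \<in> space M. c \<le> opnorm (\<pi> n \<omega> a)}" using w by simp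
    qed
    have "Pnonempty M d \<pi> 1 U n \<le> measure M {\<omega> \<in> space M. c \<le> opnorm (\<pi> n \<omega> a)}"
      unfolding Pnonempty_def
      by (rule finite_measure.finite_measure_mono[OF prob_space.finite_measure[OF prob] sub E_meas])
    thus ?thesis unfolding rate_def by (rule rate_mono)
  qed
  hence "liminf (rate M d \<pi> 1 U) \<le>
     liminf (\<lambda>n. ereal (1 / real (d n)) * elog (measure M {\<omega> \<in> space M. c \<le> opnorm (\<pi> n \<omega> a)}))"
    by (intro Liminf_mono) auto
  ultimately show ?thesis by order
qed

lemma lower_bound:
  assumes LD: "LD_convergent A M d \<pi>" and pos: "cpositive A a" and c: "c > 0"
  shows "(SUP c'\<in>{c<..}. I_fun A M d \<pi> a c') \<le>
     liminf (\<lambda>n. ereal (1 / real (d n)) * elog (measure M {\<omega> \<in> space M. c \<le> opnorm (\<pi> n \<omega> a)}))"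
proof (rule SUP_least)
  fix c' assume "c' \<in> {c<..}"
  hence c': "c' > c" by simp
  show "I_fun A M d \<pi> a c' \<le> liminf (\<lambda>n. ereal (1 / real (d n)) * elog (measure M {\<omega> \<in> space M. c \<le> opnorm (\<pi> n \<omega> a)}))"
    unfolding I_fun_def
    by (rule Sup_least) (blast intro: lower_piece[OF LD pos c c'])
qed

end


lemma limsup_sum_bound:
  fixes P :: "nat \<Rightarrow> real" and Q :: "'i \<Rightarrow> nat \<Rightarrow> real" and d :: "nat \<Rightarrow> nat" and t :: real
  assumes Psi: "finite \<Psi>" and dl: "filterlim d at_top sequentially"
    and PQ: "\<And>n. P n \<le> (\<Sum>\<psi>\<in>\<Psi>. Q \<psi> n)"
    and lim: "\<And>\<psi>. \<psi> \<in> \<Psi> \<Longrightarrow> limsup (\<lambda>n. ereal (1 / real (d n)) * elog (Q \<psi> n)) < ereal t"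
  shows "limsup (\<lambda>n. ereal (1 / real (d n)) * elog (P n)) \<le> ereal t"
proof -
  define m where "m = Max (insert (-\<infinity>) ((\<lambda>\<psi>. limsup (\<lambda>n. ereal (1 / real (d n)) * elog (Q \<psi> n))) ` \<Psi>))"
  have "m < ereal t" unfolding m_def using Psi lim by (subst Max_less_iff) auto
  then obtain t' where t': "m < ereal t'" "ereal t' < ereal t" using ereal_dense2 by blast
  have lt: "limsup (\<lambda>n. ereal (1 / real (d n)) * elog (Q \<psi> n)) < ereal t'" if "\<psi> \<in> \<Psi>" for \<psi>
  proof -
    have "limsup (\<lambda>n. ereal (1 / real (d n)) * elog (Q \<psi> n)) \<le> m" unfolding m_def using Psi that by (intro Max_ge) auto
    thus ?thesis using t'(1) by order
  qed
  have ev1: "\<forall>\<^sub>F n in sequentially. \<forall>\<psi>\<in>\<Psi>. ereal (1 / real (d n)) * elog (Q \<psi> n) < ereal t'"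
    using Psi lt by (intro eventually_ball_finite ballI Limsup_lessD) auto
  have ev2: "\<forall>\<^sub>F n in sequentially. 1 \<le> d n" using dl unfolding filterlim_at_top by blast
  define K where "K = real (card \<Psi>) + 1"
  have K: "K \<ge> 1" by (simp add: K_def)
  have ev: "\<forall>\<^sub>F n in sequentially. ereal (1 / real (d n)) * elog (P n) \<le> ereal (ln K / real (d n) + t')"
    using ev1 ev2
  proof eventually_elim
    case (elim n)
    have dpos: "real (d n) > 0" using elim(2) by simp
    have Qb: "Q \<psi> n \<le> exp (t' * real (d n))" if "\<psi> \<in> \<Psi>" for \<psi>
    proof (cases "Q \<psi> n \<le> 0")
      case True thus ?thesis by (meson exp_gt_zero less_le_not_le order_trans linear)
    next
      case False
      hence "ereal (1 / real (d n)) * elog (Q \<psi> n) = ereal (ln (Q \<psi> n) / real (d n))" by (simp add: elog_def)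
      hence "ln (Q \<psi> n) / real (d n) < t'" using elim(1) that by auto
      hence "ln (Q \<psi> n) < t' * real (d n)" using dpos by (simp add: divide_less_eq)
      hence "exp (ln (Q \<psi> n)) < exp (t' * real (d n))" by simp
      thus ?thesis using False by simp
    qed
    have "P n \<le> (\<Sum>\<psi>\<in>\<Psi>. Q \<psi> n)" by (rule PQ)
    also have "\<dots> \<le> of_nat (card \<Psi>) * exp (t' * real (d n))" by (rule sum_bounded_above) (use Qb in auto)
    also have "\<dots> \<le> K * exp (t' * real (d n))" by (simp add: K_def)
    finally have Pb: "P n \<le> K * exp (t' * real (d n))" .
    show ?case
    proof (cases "P n \<le> 0")
      case True thus ?thesis using dpos by (simp add: elog_def)
    next
      case False
      hence "ln (P n) \<le> ln (K * exp (t' * real (d n)))" using Pb K by (subst ln_le_cancel_iff) auto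
      also have "\<dots> = ln K + t' * real (d n)" using K by (simp add: ln_mult)
      finally have "ln (P n) / real (d n) \<le> (ln K + t' * real (d n)) / real (d n)" using dpos by (intro divide_right_mono) auto
      also have "\<dots> = ln K / real (d n) + t'" using dpos by (simp add: add_divide_distrib)
      finally have "ln (P n) / real (d n) \<le> ln K / real (d n) + t'" .
      thus ?thesis using False by (simp add: elog_def)
    qed
  qed
  have dinf: "filterlim (\<lambda>n. real (d n)) at_infinity sequentially"
    by (rule filterlim_at_top_imp_at_infinity, rule filterlim_compose[OF filterlim_real_sequentially dl])
  have "(\<lambda>n. ln K / real (d n) + t') \<longlonglongrightarrow> 0 + t'"
    by (intro tendsto_add tendsto_divide_0[OF tendsto_const dinf] tendsto_const)
  hence "(\<lambda>n. ereal (ln K / real (d n) + t')) \<longlonglongrightarrow> ereal t'" by (simp add: tendsto_ereal)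
  hence "limsup (\<lambda>n. ereal (ln K / real (d n) + t')) = ereal t'" by (rule lim_imp_Limsup[OF trivial_limit_sequentially])
  moreover have "limsup (\<lambda>n. ereal (1 / real (d n)) * elog (P n)) \<le> limsup (\<lambda>n. ereal (ln K / real (d n) + t'))"
    by (rule Limsup_mono[OF ev])
  ultimately show ?thesis using t'(2) by order
qed

section \<open>Compactness\<close>

lemma coord_cont: "continuous_on UNIV (\<lambda>f :: 'a \<Rightarrow> complex. f x)" by simp

context ca
begin

definition K0 :: "('a \<Rightarrow> complex) set" where
  "K0 = {f. f \<in> states A \<and> (\<forall>x. cmod (f x) \<le> nm x)}"

lemma K0_compact: "compact K0"
proof -
  have cb: "compact (Pi UNIV (\<lambda>x. cball (0::complex) (nm x)))"
  proof -
    have "compactin (product_topology (\<lambda>_. euclidean) UNIV) (PiE UNIV (\<lambda>x. cball (0::complex) (nm x)))"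
      by (subst compactin_PiE) auto
    thus ?thesis by (simp add: euclidean_product_topology PiE_UNIV_domain)
  qed
  define C1 where "C1 = (\<Inter>x. \<Inter>y. {f :: 'a \<Rightarrow> complex. f (x \<boxplus> y) = f x + f y})"
  define C2 where "C2 = (\<Inter>\<alpha>. \<Inter>x. {f :: 'a \<Rightarrow> complex. f (\<alpha> \<cdot>\<^sub>A x) = \<alpha> * f x})"
  define C3 where "C3 = (\<Inter>b. {f :: 'a \<Rightarrow> complex. Im (f (st b \<boxtimes> b)) = 0})"
  define C4 where "C4 = (\<Inter>b. {f :: 'a \<Rightarrow> complex. 0 \<le> Re (f (st b \<boxtimes> b))})"
  define C5 where "C5 = {f :: 'a \<Rightarrow> complex. f o1 = 1}"
  have cl: "closed (C1 \<inter> C2 \<inter> C3 \<inter> C4 \<inter> C5)"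
    unfolding C1_def C2_def C3_def C4_def C5_def
    by (intro closed_Int closed_INT ballI closed_Collect_eq closed_Collect_le continuous_intros coord_cont)
  have "K0 = Pi UNIV (\<lambda>x. cball (0::complex) (nm x)) \<inter> (C1 \<inter> C2 \<inter> C3 \<inter> C4 \<inter> C5)"
    unfolding K0_def C1_def C2_def C3_def C4_def C5_def states_def cplx_nonneg_def by auto
  thus ?thesis using compact_Int_closed[OF cb cl] by simp
qed

lemma open_fun_nbhd: "finite F \<Longrightarrow> open {f :: 'a \<Rightarrow> complex. \<forall>x\<in>F. cmod (f x - \<psi> x) < e}"
proof -
  assume F: "finite F"
  have "{f :: 'a \<Rightarrow> complex. \<forall>x\<in>F. cmod (f x - \<psi> x) < e} = (\<Inter>x\<in>F. {f. cmod (f x - \<psi> x) < e})" by auto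
  also have "open \<dots>" using F by (intro open_INT ballI open_Collect_less continuous_intros coord_cont)
  finally show ?thesis .
qed

lemma open_half: "open {f :: 'a \<Rightarrow> complex. Re (f a) < r}"
  by (intro open_Collect_less continuous_intros coord_cont)

end


section \<open>Upper bound\<close>

context rseq
begin

lemma upper_fixed_t:
  assumes sep: "cstar_separable A" and LD: "LD_convergent A M d \<pi>" and pos: "cpositive A a" and c: "c > 0"
    and It: "I_fun A M d \<pi> a c < ereal t"
  shows "limsup (\<lambda>n. ereal (1 / real (d n)) * elog (measure M {\<omega> \<in> space M. c \<le> opnorm (\<pi> n \<omega> a)})) \<le> ereal t"
proof -
  obtain b where b: "a = st b \<boxtimes> b" using pos unfolding cpositive_def by blast
  define KC where "KC = {\<psi> \<in> K0. c \<le> Re (\<psi> a)}"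
  have ex: "\<exists>p. cp_open A 1 (fst p) \<and> limsup (rate M d \<pi> 1 (fst p)) < ereal t \<and> finite (fst (snd p))
      \<and> snd (snd p) > 0 \<and> basic_nbhd A 1 (state_as_cp \<psi>) (fst (snd p)) (snd (snd p)) \<subseteq> fst p"
    if psi: "\<psi> \<in> KC" for \<psi>
  proof -
    have st: "\<psi> \<in> states A" and re: "c \<le> Re (\<psi> a)" using psi by (auto simp: KC_def K0_def)
    have "h0 A M d \<pi> 1 (state_as_cp \<psi>) \<le> I_fun A M d \<pi> a c"
      unfolding I_fun_def by (rule Sup_upper) (use st re in blast)
    hence hlt: "h0 A M d \<pi> 1 (state_as_cp \<psi>) < ereal t" using It by order
    have cp: "state_as_cp \<psi> \<in> cp_maps A 1" by (rule posfun_cp[OF states_posfun[OF st]])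
    obtain U where U: "cp_open A 1 U" "state_as_cp \<psi> \<in> U" "limsup (rate M d \<pi> 1 U) < ereal t"
      using LD cp hlt unfolding LD_convergent_def by blast
    from U(1,2) have "cp_nbhd A 1 (state_as_cp \<psi>) U" unfolding cp_open_def by blast
    then obtain F e where "finite F" "e > 0" "basic_nbhd A 1 (state_as_cp \<psi>) F e \<subseteq> U"
      unfolding cp_nbhd_def by blast
    thus ?thesis using U by (intro exI[of _ "(U, F, e)"]) auto
  qed
  then obtain G where G: "\<And>\<psi>. \<psi> \<in> KC \<Longrightarrow> cp_open A 1 (fst (G \<psi>)) \<and> limsup (rate M d \<pi> 1 (fst (G \<psi>))) < ereal t
      \<and> finite (fst (snd (G \<psi>))) \<and> snd (snd (G \<psi>)) > 0
      \<and> basic_nbhd A 1 (state_as_cp \<psi>) (fst (snd (G \<psi>))) (snd (snd (G \<psi>))) \<subseteq> fst (G \<psi>)"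
    by metis
  define Uf where "Uf \<psi> = fst (G \<psi>)" for \<psi>
  define Ff where "Ff \<psi> = fst (snd (G \<psi>))" for \<psi>
  define ef where "ef \<psi> = snd (snd (G \<psi>))" for \<psi>
  define Ob where "Ob \<psi> = {f :: 'a \<Rightarrow> complex. \<forall>x\<in>Ff \<psi>. cmod (f x - \<psi> x) < ef \<psi>}" for \<psi>
  define L where "L k = {f :: 'a \<Rightarrow> complex. Re (f a) < c - inverse (real (Suc k))}" for k
  define g where "g = case_sum Ob L"
  define Cv where "Cv = Inl ` KC \<union> Inr ` (UNIV :: nat set)"
  have opn: "open (g T)" if "T \<in> Cv" for T
  proof -
    from that consider (l) \<psi> where "\<psi> \<in> KC" "T = Inl \<psi>" | (r) k where "T = Inr k" by (auto simp: Cv_def)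
    thus ?thesis
    proof cases
      case l
      have "finite (Ff \<psi>)" using G[OF l(1)] by (simp add: Ff_def)
      thus ?thesis using l by (simp add: g_def Ob_def open_fun_nbhd)
    next
      case r thus ?thesis by (simp add: g_def L_def open_half)
    qed
  qed
  have cov: "K0 \<subseteq> (\<Union>T\<in>Cv. g T)"
  proof
    fix f assume f: "f \<in> K0"
    show "f \<in> (\<Union>T\<in>Cv. g T)"
    proof (cases "c \<le> Re (f a)")
      case True
      hence "f \<in> KC" using f by (simp add: KC_def)
      moreover have "f \<in> Ob f" using G[OF \<open>f \<in> KC\<close>] by (simp add: Ob_def ef_def)
      ultimately show ?thesis by (auto simp: Cv_def g_def intro!: bexI[of _ "Inl f"])
    next
      case False
      then obtain k where "inverse (real (Suc k)) < c - Re (f a)" using reals_Archimedean by (metis diff_gt_0_iff_gt not_le)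
      hence "f \<in> L k" by (simp add: L_def)
      thus ?thesis by (auto simp: Cv_def g_def intro!: bexI[of _ "Inr k"])
    qed
  qed
  obtain C' where C': "C' \<subseteq> Cv" "finite C'" "K0 \<subseteq> (\<Union>T\<in>C'. g T)"
    using compactE_image[OF K0_compact opn cov] by blast
  define \<Psi> where "\<Psi> = Inl -` C'"
  have Psi_fin: "finite \<Psi>" unfolding \<Psi>_def by (rule finite_vimageI[OF C'(2)]) (simp add: inj_on_def)
  have Psi_KC: "\<Psi> \<subseteq> KC" using C'(1) by (auto simp: \<Psi>_def Cv_def)
  define N where "N = Max (insert 0 (Inr -` C'))"
  have Nfin: "finite (insert 0 (Inr -` C'))" using C'(2) by (auto intro: finite_vimageI simp: inj_on_def)
  have kN: "k \<le> N" if "Inr k \<in> C'" for k unfolding N_def using Nfin that by (intro Max_ge) auto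
  have key: "\<exists>\<psi>\<in>\<Psi>. f \<in> Ob \<psi>" if f: "f \<in> K0" "c - inverse (real (Suc N)) \<le> Re (f a)" for f
  proof -
    from f(1) C'(3) obtain T where T: "T \<in> C'" "f \<in> g T" by blast
    show ?thesis
    proof (cases T)
      case (Inl \<psi>) thus ?thesis using T by (auto simp: \<Psi>_def g_def)
    next
      case (Inr k)
      hence "k \<le> N" using T kN by simp
      hence "inverse (real (Suc N)) \<le> inverse (real (Suc k))" by (simp add: le_imp_inverse_le)
      moreover have "Re (f a) < c - inverse (real (Suc k))" using T Inr by (simp add: g_def L_def)
      ultimately show ?thesis using f(2) by linarith
    qed
  qed
  define Q where "Q \<psi> n = Pnonempty M d \<pi> 1 (Uf \<psi>) n" for \<psi> n
  have PQ: "measure M {\<omega> \<in> space M. c \<le> opnorm (\<pi> n \<omega> a)} \<le> (\<Sum>\<psi>\<in>\<Psi>. Q \<psi> n)" for n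
  proof -
    define X where "X \<psi> = {\<omega> \<in> space M. Xset (d n) 1 (\<pi> n \<omega>) (Uf \<psi>) \<noteq> {}}" for \<psi>
    have Xm: "X \<psi> \<in> sets M" if "\<psi> \<in> \<Psi>" for \<psi>
      unfolding X_def by (rule X_meas[OF sep]) (use G Psi_KC that in \<open>auto simp: Uf_def\<close>)
    have sub: "{\<omega> \<in> space M. c \<le> opnorm (\<pi> n \<omega> a)} \<subseteq> (\<Union>\<psi>\<in>\<Psi>. X \<psi>)"
    proof
      fix \<omega> assume "\<omega> \<in> {\<omega> \<in> space M. c \<le> opnorm (\<pi> n \<omega> a)}"
      hence w: "\<omega> \<in> space M" "c \<le> opnorm (\<pi> n \<omega> a)" by auto
      interpret r: rep A "d n" "\<pi> n \<omega>" by (rule is_rep[OF w(1)])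
      have del: "inverse (real (Suc N)) > 0" by simp
      obtain v where v: "v \<in> carrier_vec (d n)" "vnorm v = 1" "Re (qf (\<pi> n \<omega> a) v) > c - inverse (real (Suc N))"
        using r.opnorm_unit_vec[OF w(2)[unfolded b] c del] b by blast
      define f where "f = (\<lambda>x. qf (\<pi> n \<omega> x) v)"
      have fK: "f \<in> K0" using r.tau_state[OF v(1,2)] r.tau_bound[OF v(1)] v(2)
        by (simp add: K0_def f_def r.tau_def)
      obtain \<psi> where psi: "\<psi> \<in> \<Psi>" "f \<in> Ob \<psi>" using key[OF fK] v(3) by (auto simp: f_def)
      have "state_as_cp f \<in> basic_nbhd A 1 (state_as_cp \<psi>) (Ff \<psi>) (ef \<psi>)"
        using posfun_cp[OF r.tau_posfun[OF v(1)]] psi(2)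
        by (simp add: basic_nbhd_def state_as_cp_def Ob_def f_def r.tau_def)
      also have "\<dots> \<subseteq> Uf \<psi>" using G[of \<psi>] psi(1) Psi_KC by (auto simp: Uf_def Ff_def ef_def)
      finally have "Xset (d n) 1 (\<pi> n \<omega>) (Uf \<psi>) \<noteq> {}" using r.Xset_ne_iff v(1) by (auto simp: f_def)
      thus "\<omega> \<in> (\<Union>\<psi>\<in>\<Psi>. X \<psi>)" using psi(1) w(1) by (auto simp: X_def)
    qed
    have fm: "finite_measure M" by (rule prob_space.finite_measure[OF prob])
    have "measure M {\<omega> \<in> space M. c \<le> opnorm (\<pi> n \<omega> a)} \<le> measure M (\<Union>\<psi>\<in>\<Psi>. X \<psi>)"
      by (rule finite_measure.finite_measure_mono[OF fm sub]) (use Psi_fin Xm in blast)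
    also have "\<dots> \<le> (\<Sum>\<psi>\<in>\<Psi>. measure M (X \<psi>))"
      by (rule finite_measure.finite_measure_subadditive_finite[OF fm Psi_fin]) (use Xm in blast)
    also have "\<dots> = (\<Sum>\<psi>\<in>\<Psi>. Q \<psi> n)" by (simp add: X_def Q_def Pnonempty_def)
    finally show ?thesis .
  qed
  show ?thesis
  proof (rule limsup_sum_bound[OF Psi_fin d_lim PQ])
    fix \<psi> assume "\<psi> \<in> \<Psi>"
    hence "limsup (rate M d \<pi> 1 (Uf \<psi>)) < ereal t" using G Psi_KC by (auto simp: Uf_def)
    moreover have "rate M d \<pi> 1 (Uf \<psi>) = (\<lambda>n. ereal (1 / real (d n)) * elog (Q \<psi> n))"
      by (rule ext) (simp add: rate_def Q_def)
    ultimately show "limsup (\<lambda>n. ereal (1 / real (d n)) * elog (Q \<psi> n)) < ereal t" by simp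
  qed
qed

lemma upper_bound:
  assumes sep: "cstar_separable A" and LD: "LD_convergent A M d \<pi>" and pos: "cpositive A a" and c: "c > 0"
  shows "limsup (\<lambda>n. ereal (1 / real (d n)) * elog (measure M {\<omega> \<in> space M. c \<le> opnorm (\<pi> n \<omega> a)})) \<le> I_fun A M d \<pi> a c"
proof (rule ccontr)
  assume "\<not> ?thesis"
  hence "I_fun A M d \<pi> a c < limsup (\<lambda>n. ereal (1 / real (d n)) * elog (measure M {\<omega> \<in> space M. c \<le> opnorm (\<pi> n \<omega> a)}))"
    by simp
  then obtain t where t: "I_fun A M d \<pi> a c < ereal t"
    "ereal t < limsup (\<lambda>n. ereal (1 / real (d n)) * elog (measure M {\<omega> \<in> space M. c \<le> opnorm (\<pi> n \<omega> a)}))"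
    using ereal_dense2 by blast
  thus False using upper_fixed_t[OF sep LD pos c t(1)] by simp
qed

end

theorem proposition6p6:
  fixes A :: "'a cstar_alg" and M :: "'w measure" and d :: "nat \<Rightarrow> nat"
    and \<pi> :: "nat \<Rightarrow> 'w \<Rightarrow> 'a \<Rightarrow> complex mat" and a :: 'a and c :: real
  assumes "cstar_algebra A" and "cstar_separable A"
    and "random_AP_seq A M d \<pi>" and "LD_convergent A M d \<pi>"
    and "cpositive A a" and "c > 0"
  defines "P \<equiv> (\<lambda>n. measure M {\<omega> \<in> space M. opnorm (\<pi> n \<omega> a) \<ge> c})"
  shows "limsup (\<lambda>n. ereal (1 / real (d n)) * elog (P n)) \<le> I_fun A M d \<pi> a c
       \<and> liminf (\<lambda>n. ereal (1 / real (d n)) * elog (P n)) \<ge> (SUP c'\<in>{c<..}. I_fun A M d \<pi> a c')"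
proof -
  interpret rseq A M d \<pi>
    using assms(1,3) by (simp add: rseq_def rseq_axioms_def ca_def)
  show ?thesis unfolding P_def
    using upper_bound[OF assms(2,4,5,6)] lower_bound[OF assms(4,5,6)] by simp
qed


end
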